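(* Let $R=S/J$ be a complete intersection SAGA of codimension $n+1$ presented by quadrics, and suppose $w,z\in R^1\setminus\{0\}$ satisfy $zw=0$. Then $(z)=(0:w)$ as ideals of $R$, and $\bar R=R/(z)$ is a complete intersection SAGA of codimension $n$ presented by quadrics. In particular, $\dim K^s_w=\dim R^{s-1}-\dim K^{s-1}_z$ for all $s\ge1$.
   Context: $\mathbb K$ is an algebraically closed field of characteristic $0$. A complete intersection SAGA of codimension $n+1$ presented by quadrics is $R=S/J$, $S=\mathbb K[x_0,\dots,x_n]$, $J$ generated by a regular sequence of $n+1$ homogeneous quadrics (socle degree $n+1$). For $q\in R^s$, $K^a_q=\ker(q\cdot:R^a\to R^{a+s})$, with $K^0_q=\ker(q\cdot:R^0\to R^s)$. $(0:w)=\{r\in R\mid rw=0\}$. *)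

theory Defs
  imports "HOL-Library.Poly_Mapping" "HOL-Computational_Algebra.Polynomial"
begin

text \<open>Multivariate polynomials over a field K in variables x_0, x_1, ...:
  a polynomial is a finitely supported map from monomials (exponent vectors
  nat =>0 nat) to coefficients.\<close>

type_synonym 'a mpoly = "(nat \<Rightarrow>\<^sub>0 nat) \<Rightarrow>\<^sub>0 'a"

definition alg_closed_field :: "'a::field itself \<Rightarrow> bool" where
  "alg_closed_field _ \<longleftrightarrow> (\<forall>p::'a poly. 0 < Polynomial.degree p \<longrightarrow> (\<exists>x. poly p x = 0))"

definition const :: "'a::comm_ring_1 \<Rightarrow> 'a mpoly" where
  "const c = Poly_Mapping.single 0 c"

definition var :: "nat \<Rightarrow> 'a::comm_ring_1 mpoly" where
  "var i = Poly_Mapping.single (Poly_Mapping.single i 1) 1"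

definition smul :: "'a::comm_ring_1 \<Rightarrow> 'a mpoly \<Rightarrow> 'a mpoly" where
  "smul c p = const c * p"

definition tdeg :: "(nat \<Rightarrow>\<^sub>0 nat) \<Rightarrow> nat" where
  "tdeg m = sum (Poly_Mapping.lookup m) (Poly_Mapping.keys m)"

definition PR :: "nat \<Rightarrow> 'a::comm_ring_1 mpoly set" where
  "PR N = {p. \<forall>m\<in>Poly_Mapping.keys p. Poly_Mapping.keys m \<subseteq> {..<N}}"

definition homogeneous :: "nat \<Rightarrow> 'a::comm_ring_1 mpoly \<Rightarrow> bool" where
  "homogeneous d p \<longleftrightarrow> (\<forall>m\<in>Poly_Mapping.keys p. tdeg m = d)"

definition Hom :: "nat \<Rightarrow> nat \<Rightarrow> 'a::comm_ring_1 mpoly set" where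
  "Hom N d = {p \<in> PR N. homogeneous d p}"

definition gen_ideal :: "nat \<Rightarrow> 'a::comm_ring_1 mpoly list \<Rightarrow> 'a mpoly set" where
  "gen_ideal N gs = {p. \<exists>c. (\<forall>i<length gs. c i \<in> PR N) \<and> p = (\<Sum>i<length gs. c i * gs ! i)}"

definition regular_seq :: "nat \<Rightarrow> 'a::comm_ring_1 mpoly list \<Rightarrow> bool" where
  "regular_seq N gs \<longleftrightarrow> set gs \<subseteq> PR N \<and> gen_ideal N gs \<noteq> PR N \<and>
     (\<forall>i<length gs. \<forall>f\<in>PR N. f * gs ! i \<in> gen_ideal N (take i gs) \<longrightarrow> f \<in> gen_ideal N (take i gs))"

text \<open>qs presents a complete intersection SAGA of codimension N by quadrics:
  R = K[x_0,...,x_{N-1}] / (qs), with qs a regular sequence of N homogeneous quadrics.\<close>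
definition CI_quadric_presentation :: "nat \<Rightarrow> 'a::comm_ring_1 mpoly list \<Rightarrow> bool" where
  "CI_quadric_presentation N qs \<longleftrightarrow> length qs = N \<and> set qs \<subseteq> Hom N 2 \<and> regular_seq N qs"

definition subst :: "(nat \<Rightarrow> 'a::comm_ring_1 mpoly) \<Rightarrow> 'a mpoly \<Rightarrow> 'a mpoly" where
  "subst \<sigma> p = (\<Sum>m\<in>Poly_Mapping.keys p. const (Poly_Mapping.lookup p m) * (\<Prod>i\<in>Poly_Mapping.keys m. \<sigma> i ^ Poly_Mapping.lookup m i))"

definition kdim :: "'a::field mpoly set \<Rightarrow> nat" where
  "kdim U = vector_space.dim smul U"

definition qdim :: "'a::field mpoly set \<Rightarrow> 'a mpoly set \<Rightarrow> int" where
  "qdim U W = int (kdim U) - int (kdim W)"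

text \<open>R^s = S^s / (J \<inter> S^s) and K^s_q = ker(q : R^s \<rightarrow> R^{s+deg q}) = {f \<in> S^s. f q \<in> J} / (J \<inter> S^s).\<close>
definition Rdim :: "nat \<Rightarrow> 'a::field mpoly set \<Rightarrow> nat \<Rightarrow> int" where
  "Rdim N J s = qdim (Hom N s) (J \<inter> Hom N s)"

definition Kdim :: "nat \<Rightarrow> 'a::field mpoly set \<Rightarrow> 'a mpoly \<Rightarrow> nat \<Rightarrow> int" where
  "Kdim N J q s = qdim {f \<in> Hom N s. f * q \<in> J} (J \<inter> Hom N s)"

end

theory Submission
  imports Defs "HOL-Library.FuncSet"
begin

lemma const_add: "const (a + b) = const a + (const b :: 'a::comm_ring_1 mpoly)"
  by (simp add: const_def single_add)
lemma const_mult: "const (a * b) = const a * (const b :: 'a::comm_ring_1 mpoly)"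
  by (simp add: const_def mult_single)
lemma const_0[simp]: "const 0 = (0 :: 'a::comm_ring_1 mpoly)"
  by (simp add: const_def)
lemma const_1[simp]: "const 1 = (1 :: 'a::comm_ring_1 mpoly)"
  by (simp add: const_def)
lemma const_uminus: "const (- a) = - (const a :: 'a::comm_ring_1 mpoly)"
  by (simp add: const_def single_uminus)
lemma const_diff: "const (a - b) = const a - (const b :: 'a::comm_ring_1 mpoly)"
  by (simp add: const_def single_diff)
lemma const_eq_iff[simp]: "const a = (const b :: 'a::comm_ring_1 mpoly) \<longleftrightarrow> a = b"
  unfolding const_def by (metis Poly_Mapping.lookup_single_eq)
lemma lookup_const: "Poly_Mapping.lookup (const c) m = (if m = 0 then c else 0)"
  by (simp add: const_def lookup_single)

lemma single_const: "Poly_Mapping.single m c = const c * Poly_Mapping.single m (1::'a::comm_ring_1)"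
  by (simp add: const_def mult_single)

lemma pm_expansion: "p = (\<Sum>m\<in>Poly_Mapping.keys p. Poly_Mapping.single m (Poly_Mapping.lookup p m))"
proof (rule poly_mapping_eqI)
  fix k
  have "Poly_Mapping.lookup (\<Sum>m\<in>Poly_Mapping.keys p. Poly_Mapping.single m (Poly_Mapping.lookup p m)) k
      = (\<Sum>m\<in>Poly_Mapping.keys p. (if m = k then Poly_Mapping.lookup p m else 0))"
    by (simp add: lookup_sum lookup_single when_def)
  also have "\<dots> = Poly_Mapping.lookup p k"
    by (simp add: in_keys_iff)
  finally show "Poly_Mapping.lookup p k = Poly_Mapping.lookup (\<Sum>m\<in>Poly_Mapping.keys p. Poly_Mapping.single m (Poly_Mapping.lookup p m)) k" by simp
qed

lemma pm_expansion_superset: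
  assumes "finite A" "Poly_Mapping.keys p \<subseteq> A"
  shows "p = (\<Sum>m\<in>A. Poly_Mapping.single m (Poly_Mapping.lookup p m))"
proof -
  have "(\<Sum>m\<in>A. Poly_Mapping.single m (Poly_Mapping.lookup p m)) = (\<Sum>m\<in>Poly_Mapping.keys p. Poly_Mapping.single m (Poly_Mapping.lookup p m))"
    by (rule sum.mono_neutral_right) (use assms in \<open>auto simp: in_keys_iff\<close>)
  then show ?thesis using pm_expansion[of p] by simp
qed

lemma lookup_add_nat: "Poly_Mapping.lookup (m + m') i = Poly_Mapping.lookup m i + (Poly_Mapping.lookup m' i :: nat)"
  by (simp add: lookup_add)

lemma keys_add_nat: "Poly_Mapping.keys (m + (m'::'b \<Rightarrow>\<^sub>0 nat)) = Poly_Mapping.keys m \<union> Poly_Mapping.keys m'"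
  by (auto simp: in_keys_iff lookup_add)

lemma tdeg_superset: "finite A \<Longrightarrow> Poly_Mapping.keys m \<subseteq> A \<Longrightarrow> tdeg m = (\<Sum>i\<in>A. Poly_Mapping.lookup m i)"
  unfolding tdeg_def by (rule sum.mono_neutral_left) (auto simp: in_keys_iff)

lemma tdeg_add: "tdeg (m + m') = tdeg m + tdeg m'"
proof -
  let ?A = "Poly_Mapping.keys m \<union> Poly_Mapping.keys m'"
  have "tdeg (m + m') = (\<Sum>i\<in>?A. Poly_Mapping.lookup (m+m') i)"
    by (rule tdeg_superset) (auto simp: keys_add_nat)
  also have "\<dots> = (\<Sum>i\<in>?A. Poly_Mapping.lookup m i) + (\<Sum>i\<in>?A. Poly_Mapping.lookup m' i)"
    by (simp add: lookup_add sum.distrib)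
  also have "\<dots> = tdeg m + tdeg m'"
    by (simp add: tdeg_superset[symmetric])
  finally show ?thesis .
qed

lemma tdeg_0[simp]: "tdeg 0 = 0" by (simp add: tdeg_def)

lemma tdeg_eq_0: "tdeg m = 0 \<longleftrightarrow> m = 0"
proof
  assume "tdeg m = 0"
  then have "\<forall>i\<in>Poly_Mapping.keys m. Poly_Mapping.lookup m i = 0" unfolding tdeg_def by simp
  then show "m = 0" by (auto simp: in_keys_iff intro!: poly_mapping_eqI)
qed simp

lemma tdeg_single: "tdeg (Poly_Mapping.single i k) = k"
  by (simp add: tdeg_def)

lemma PR_iff: "p \<in> PR N \<longleftrightarrow> (\<forall>m\<in>Poly_Mapping.keys p. \<forall>i\<in>Poly_Mapping.keys m. i < N)"
  by (auto simp: PR_def)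

lemma PR_0[simp]: "0 \<in> PR N" by (simp add: PR_def)
lemma PR_const[simp]: "const c \<in> PR N" by (simp add: PR_def const_def)
lemma PR_1[simp]: "1 \<in> PR N" using PR_const[of 1 N] by simp
lemma PR_var: "i < N \<Longrightarrow> var i \<in> PR N" by (simp add: PR_def var_def)
lemma PR_single: "Poly_Mapping.keys m \<subseteq> {..<N} \<Longrightarrow> Poly_Mapping.single m c \<in> PR N"
  by (simp add: PR_def)
lemma PR_add: "p \<in> PR N \<Longrightarrow> q \<in> PR N \<Longrightarrow> p + q \<in> PR N"
  unfolding PR_def using keys_add[of p q] by blast
lemma PR_uminus: "p \<in> PR N \<Longrightarrow> - p \<in> PR N"
  unfolding PR_def by (simp add: keys_minus)
lemma PR_diff: "p \<in> PR N \<Longrightarrow> q \<in> PR N \<Longrightarrow> p - q \<in> PR N"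
  using PR_add[OF _ PR_uminus] by (metis diff_conv_add_uminus)
lemma PR_mult: "p \<in> PR N \<Longrightarrow> q \<in> PR N \<Longrightarrow> p * q \<in> PR N"
  unfolding PR_def using keys_mult[of p q] by (force simp: keys_add_nat)
lemma PR_sum: "(\<And>x. x \<in> A \<Longrightarrow> f x \<in> PR N) \<Longrightarrow> sum f A \<in> PR N"
  by (induction A rule: infinite_finite_induct) (auto intro: PR_add)
lemma PR_prod: "(\<And>x. x \<in> A \<Longrightarrow> f x \<in> PR N) \<Longrightarrow> prod f A \<in> PR N"
  by (induction A rule: infinite_finite_induct) (auto intro: PR_mult)
lemma PR_power: "p \<in> PR N \<Longrightarrow> p ^ k \<in> PR N"
  by (induction k) (auto intro: PR_mult)

lemma homogeneous_0[simp]: "homogeneous d 0" by (simp add: homogeneous_def)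
lemma homogeneous_add: "homogeneous d p \<Longrightarrow> homogeneous d q \<Longrightarrow> homogeneous d (p + q)"
  unfolding homogeneous_def using keys_add[of p q] by blast
lemma homogeneous_uminus: "homogeneous d p \<Longrightarrow> homogeneous d (- p)"
  unfolding homogeneous_def by (simp add: keys_minus)
lemma homogeneous_diff: "homogeneous d p \<Longrightarrow> homogeneous d q \<Longrightarrow> homogeneous d (p - q)"
  using homogeneous_add[OF _ homogeneous_uminus] by (metis diff_conv_add_uminus)
lemma homogeneous_mult: "homogeneous d p \<Longrightarrow> homogeneous e q \<Longrightarrow> homogeneous (d + e) (p * q)"
  unfolding homogeneous_def using keys_mult[of p q] by (force simp: tdeg_add)
lemma homogeneous_sum: "(\<And>x. x \<in> A \<Longrightarrow> homogeneous d (f x)) \<Longrightarrow> homogeneous d (sum f A)"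
  by (induction A rule: infinite_finite_induct) (auto intro: homogeneous_add)
lemma homogeneous_const: "homogeneous 0 (const c)"
  by (simp add: homogeneous_def const_def)
lemma homogeneous_const_mult: "homogeneous d p \<Longrightarrow> homogeneous d (const c * p)"
  using homogeneous_mult[OF homogeneous_const] by fastforce
lemma homogeneous_1: "homogeneous 0 1"
  using homogeneous_const[of 1] by simp
lemma homogeneous_power: "homogeneous d p \<Longrightarrow> homogeneous (k * d) (p ^ k)"
  by (induction k) (auto simp: homogeneous_1 dest: homogeneous_mult)
lemma homogeneous_var: "homogeneous 1 (var i)"
  by (simp add: homogeneous_def var_def tdeg_single)
lemma homogeneous_prod: "(\<And>x. x \<in> A \<Longrightarrow> homogeneous (d x) (f x)) \<Longrightarrow> homogeneous (sum d A) (prod f A)"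
  by (induction A rule: infinite_finite_induct) (auto simp: homogeneous_1 intro: homogeneous_mult)

lemma Hom_iff: "p \<in> Hom N d \<longleftrightarrow> p \<in> PR N \<and> homogeneous d p"
  by (simp add: Hom_def)

lift_definition hc :: "nat \<Rightarrow> 'a::zero mpoly \<Rightarrow> 'a mpoly" is
  "\<lambda>d f m. if tdeg m = d then f m else 0"
  by (rule finite_subset[rotated], assumption) auto

lemma lookup_hc: "Poly_Mapping.lookup (hc d p) m = (if tdeg m = d then Poly_Mapping.lookup p m else 0)"
  by transfer simp

lemma keys_hc: "Poly_Mapping.keys (hc d p) \<subseteq> Poly_Mapping.keys p"
  by (auto simp: in_keys_iff lookup_hc split: if_splits)

lemma hc_add: "hc d (p + q) = hc d p + hc d (q :: 'a::comm_monoid_add mpoly)"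
  by (rule poly_mapping_eqI) (simp add: lookup_hc lookup_add)
lemma hc_0[simp]: "hc d 0 = 0"
  by (rule poly_mapping_eqI) (simp add: lookup_hc)
lemma hc_sum: "hc d (sum f A) = (\<Sum>x\<in>A. hc d (f x :: 'a::comm_monoid_add mpoly))"
  by (induction A rule: infinite_finite_induct) (auto simp: hc_add)
lemma hc_uminus: "hc d (- p) = - hc d (p :: 'a::ab_group_add mpoly)"
  by (rule poly_mapping_eqI) (simp add: lookup_hc)
lemma hc_diff: "hc d (p - q) = hc d p - hc d (q :: 'a::ab_group_add mpoly)"
  by (rule poly_mapping_eqI) (simp add: lookup_hc lookup_minus)

lemma homogeneous_hc: "homogeneous d (hc d p)"
  by (auto simp: homogeneous_def in_keys_iff lookup_hc split: if_splits)
lemma PR_hc: "p \<in> PR N \<Longrightarrow> hc d p \<in> PR N"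
  using keys_hc by (force simp: PR_def)
lemma Hom_hc: "p \<in> PR N \<Longrightarrow> hc d p \<in> Hom N d"
  by (simp add: Hom_iff PR_hc homogeneous_hc)

lemma hc_homogeneous_same: "homogeneous d p \<Longrightarrow> hc d p = p"
  by (rule poly_mapping_eqI) (auto simp: lookup_hc homogeneous_def in_keys_iff)
lemma hc_homogeneous_other: "homogeneous e p \<Longrightarrow> e \<noteq> d \<Longrightarrow> hc d p = 0"
  by (rule poly_mapping_eqI) (auto simp: lookup_hc homogeneous_def in_keys_iff)

lemma hc_decomp: "p = (\<Sum>d\<in>tdeg ` Poly_Mapping.keys p. hc d (p :: 'a::comm_monoid_add mpoly))"
proof (rule poly_mapping_eqI)
  fix m
  have "Poly_Mapping.lookup (\<Sum>d\<in>tdeg ` Poly_Mapping.keys p. hc d p) m = (\<Sum>d\<in>tdeg ` Poly_Mapping.keys p. if d = tdeg m then Poly_Mapping.lookup p m else 0)"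
    by (simp add: lookup_sum lookup_hc eq_commute)
  also have "\<dots> = Poly_Mapping.lookup p m"
    by (auto simp: in_keys_iff)
  finally show "Poly_Mapping.lookup p m = Poly_Mapping.lookup (\<Sum>d\<in>tdeg ` Poly_Mapping.keys p. hc d p) m" by simp
qed

lemma hc_not_deg: "d \<notin> tdeg ` Poly_Mapping.keys p \<Longrightarrow> hc d p = 0"
  by (rule poly_mapping_eqI) (auto simp: lookup_hc in_keys_iff)

lemma hc_mult_hom:
  fixes p q :: "'a::comm_ring_1 mpoly"
  assumes q: "homogeneous e q"
  shows "hc k (p * q) = (if e \<le> k then hc (k - e) p * q else 0)"
proof -
  let ?T = "tdeg ` Poly_Mapping.keys p"
  have "p * q = (\<Sum>d\<in>?T. hc d p * q)"
    by (subst hc_decomp[of p]) (simp add: sum_distrib_right)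
  then have "hc k (p * q) = (\<Sum>d\<in>?T. hc k (hc d p * q))"
    by (simp add: hc_sum)
  also have "\<dots> = (\<Sum>d\<in>?T. if d + e = k then hc d p * q else 0)"
  proof (rule sum.cong[OF refl])
    fix d
    have h: "homogeneous (d + e) (hc d p * q)" by (rule homogeneous_mult[OF homogeneous_hc q])
    show "hc k (hc d p * q) = (if d + e = k then hc d p * q else 0)"
      using hc_homogeneous_same[OF h] hc_homogeneous_other[OF h] by auto
  qed
  also have "\<dots> = (if e \<le> k then hc (k - e) p * q else 0)"
  proof (cases "e \<le> k")
    case True
    have "(\<Sum>d\<in>?T. if d + e = k then hc d p * q else 0) = (\<Sum>d\<in>?T. if d = k - e then hc (k - e) p * q else 0)"
      by (rule sum.cong) (use True in auto)
    also have "\<dots> = (if k - e \<in> ?T then hc (k - e) p * q else 0)"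
      by (simp add: sum.delta)
    also have "\<dots> = hc (k - e) p * q"
      using hc_not_deg[of "k - e" p] by auto
    finally show ?thesis using True by simp
  next
    case False
    then have "\<forall>d. d + e \<noteq> k" by auto
    then show ?thesis using False by simp
  qed
  finally show ?thesis .
qed

lemma hc_zero_const: "hc 0 p = const (Poly_Mapping.lookup p 0)"
  by (rule poly_mapping_eqI) (auto simp: lookup_hc lookup_const tdeg_eq_0)

lemma hc_const_mult: "hc d (const c * p) = const c * hc d (p::'a::comm_ring_1 mpoly)"
  using hc_mult_hom[OF homogeneous_const, of d p c] by (simp add: mult.commute)

lemma gen_ideal_PR: "set gs \<subseteq> PR N \<Longrightarrow> gen_ideal N gs \<subseteq> PR N"
  unfolding gen_ideal_def by (auto intro!: PR_sum PR_mult)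

lemma gen_ideal_0[simp]: "0 \<in> gen_ideal N gs"
  unfolding gen_ideal_def by (rule CollectI, rule exI[of _ "\<lambda>_. 0"]) simp

lemma gen_ideal_add: "a \<in> gen_ideal N gs \<Longrightarrow> b \<in> gen_ideal N gs \<Longrightarrow> a + b \<in> gen_ideal N gs"
proof -
  assume "a \<in> gen_ideal N gs" "b \<in> gen_ideal N gs"
  then obtain c d where c: "\<forall>i<length gs. c i \<in> PR N" "a = (\<Sum>i<length gs. c i * gs ! i)"
    and d: "\<forall>i<length gs. d i \<in> PR N" "b = (\<Sum>i<length gs. d i * gs ! i)"
    unfolding gen_ideal_def by blast
  show ?thesis unfolding gen_ideal_def
    by (rule CollectI, rule exI[of _ "\<lambda>i. c i + d i"])
      (simp add: c d PR_add distrib_right sum.distrib)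
qed

lemma gen_ideal_mult: "r \<in> PR N \<Longrightarrow> a \<in> gen_ideal N gs \<Longrightarrow> r * a \<in> gen_ideal N gs"
proof -
  assume r: "r \<in> PR N" and "a \<in> gen_ideal N gs"
  then obtain c where c: "\<forall>i<length gs. c i \<in> PR N" "a = (\<Sum>i<length gs. c i * gs ! i)"
    unfolding gen_ideal_def by blast
  show ?thesis unfolding gen_ideal_def
    by (rule CollectI, rule exI[of _ "\<lambda>i. r * c i"])
      (simp add: c r PR_mult sum_distrib_left mult.assoc)
qed

lemma gen_ideal_uminus: "a \<in> gen_ideal N gs \<Longrightarrow> - a \<in> gen_ideal N gs"
proof -
  assume "a \<in> gen_ideal N gs"
  moreover have "-1 \<in> PR N" using PR_uminus[OF PR_1] .
  ultimately show ?thesis using gen_ideal_mult[of "-1" N a gs] by simp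
qed

lemma gen_ideal_diff: "a \<in> gen_ideal N gs \<Longrightarrow> b \<in> gen_ideal N gs \<Longrightarrow> a - b \<in> gen_ideal N gs"
  by (metis diff_conv_add_uminus gen_ideal_add gen_ideal_uminus)

lemma gen_ideal_sum: "(\<And>x. x \<in> A \<Longrightarrow> f x \<in> gen_ideal N gs) \<Longrightarrow> sum f A \<in> gen_ideal N gs"
  by (induction A rule: infinite_finite_induct) (auto intro: gen_ideal_add)

lemma gen_ideal_nth: "i < length gs \<Longrightarrow> gs ! i \<in> gen_ideal N gs"
proof -
  assume i: "i < length gs"
  have "(\<Sum>k<length gs. (if k = i then 1 else 0) * gs ! k) = (\<Sum>k<length gs. if k = i then gs ! k else 0)"
    by (rule sum.cong) auto
  also have "\<dots> = gs ! i" using i by (simp add: sum.delta)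
  finally show ?thesis unfolding gen_ideal_def
    by (intro CollectI exI[of _ "\<lambda>k. if k = i then 1 else 0"]) auto
qed

lemma gen_ideal_mem: "g \<in> set gs \<Longrightarrow> g \<in> gen_ideal N gs"
  by (metis gen_ideal_nth in_set_conv_nth)

lemma gen_ideal_subset:
  assumes "set gs \<subseteq> gen_ideal N hs"
  shows "gen_ideal N gs \<subseteq> gen_ideal N hs"
proof
  fix p assume "p \<in> gen_ideal N gs"
  then obtain c where c: "\<forall>i<length gs. c i \<in> PR N" "p = (\<Sum>i<length gs. c i * gs ! i)"
    unfolding gen_ideal_def by blast
  show "p \<in> gen_ideal N hs" unfolding c(2)
    by (rule gen_ideal_sum) (use assms c(1) in \<open>auto intro!: gen_ideal_mult\<close>)
qed

lemma gen_ideal_mono: "set gs \<subseteq> set hs \<Longrightarrow> gen_ideal N gs \<subseteq> gen_ideal N hs"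
  by (rule gen_ideal_subset) (auto intro: gen_ideal_mem)

lemma gen_ideal_set_eq: "set gs = set hs \<Longrightarrow> gen_ideal N gs = gen_ideal N hs"
  by (simp add: gen_ideal_mono subset_antisym)

lemma gen_ideal_snoc:
  fixes z :: "'a::comm_ring_1 mpoly"
  shows "gen_ideal N (gs @ [z]) = {a + c * z | a c. a \<in> gen_ideal N gs \<and> c \<in> PR N}"
proof safe
  fix p assume "p \<in> gen_ideal N (gs @ [z])"
  then obtain c where c: "\<forall>i<Suc (length gs). c i \<in> PR N" "p = (\<Sum>i<Suc (length gs). c i * (gs @ [z]) ! i)"
    unfolding gen_ideal_def by auto
  have "p = (\<Sum>i<length gs. c i * gs ! i) + c (length gs) * z"
    unfolding c(2) by (simp add: nth_append)
  moreover have "(\<Sum>i<length gs. c i * gs ! i) \<in> gen_ideal N gs"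
    unfolding gen_ideal_def using c(1) by (auto intro!: exI[of _ c])
  ultimately show "\<exists>a c. p = a + c * z \<and> a \<in> gen_ideal N gs \<and> c \<in> PR N"
    using c(1) by blast
next
  fix a c :: "'a mpoly" assume a: "a \<in> gen_ideal N gs" and c: "c \<in> PR N"
  then obtain d where d: "\<forall>i<length gs. d i \<in> PR N" "a = (\<Sum>i<length gs. d i * gs ! i)"
    unfolding gen_ideal_def by blast
  show "a + c * z \<in> gen_ideal N (gs @ [z])"
    unfolding gen_ideal_def
    by (rule CollectI, rule exI[of _ "\<lambda>i. if i < length gs then d i else c"])
      (use c d in \<open>auto simp: nth_append\<close>)
qed

lemma gen_ideal_snoc_mem: "a \<in> gen_ideal N gs \<Longrightarrow> c \<in> PR N \<Longrightarrow> a + c * z \<in> gen_ideal N (gs @ [z])"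
  by (auto simp: gen_ideal_snoc)

definition homs :: "'a::comm_ring_1 mpoly list \<Rightarrow> bool" where
  "homs gs \<longleftrightarrow> (\<forall>g\<in>set gs. \<exists>e. homogeneous e g)"

definition poshoms :: "'a::comm_ring_1 mpoly list \<Rightarrow> bool" where
  "poshoms gs \<longleftrightarrow> (\<forall>g\<in>set gs. \<exists>e>0. homogeneous e g)"

lemma gen_ideal_hc:
  assumes h: "homs gs" and p: "p \<in> gen_ideal N gs"
  shows "hc k p \<in> gen_ideal N gs"
proof -
  obtain c where c: "\<forall>i<length gs. c i \<in> PR N" "p = (\<Sum>i<length gs. c i * gs ! i)"
    using p unfolding gen_ideal_def by blast
  define e where "e i = (SOME e. homogeneous e (gs ! i))" for i
  have e: "homogeneous (e i) (gs ! i)" if "i < length gs" for i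
    using h that unfolding homs_def e_def by (meson nth_mem someI_ex)
  have "hc k p = (\<Sum>i<length gs. hc k (c i * gs ! i))"
    by (simp add: c hc_sum)
  also have "\<dots> = (\<Sum>i<length gs. (if e i \<le> k then hc (k - e i) (c i) else 0) * gs ! i)"
    by (rule sum.cong) (auto simp: hc_mult_hom[OF e])
  finally show ?thesis unfolding gen_ideal_def
    using c(1) by (auto intro!: exI[of _ "\<lambda>i. if e i \<le> k then hc (k - e i) (c i) else 0"] PR_hc)
qed

lemma hc_0_gen_ideal:
  assumes h: "poshoms gs" and p: "p \<in> gen_ideal N gs"
  shows "hc 0 p = 0"
proof -
  obtain c where c: "\<forall>i<length gs. c i \<in> PR N" "p = (\<Sum>i<length gs. c i * gs ! i)"
    using p unfolding gen_ideal_def by blast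
  have "hc 0 (c i * gs ! i) = 0" if i: "i < length gs" for i
  proof -
    obtain e where "e > 0" "homogeneous e (gs ! i)" using h nth_mem[OF i] unfolding poshoms_def by blast
    then show ?thesis by (simp add: hc_mult_hom)
  qed
  then show ?thesis by (simp add: c hc_sum)
qed

lemma one_notin_gen_ideal:
  assumes "poshoms (gs :: 'a::field mpoly list)"
  shows "1 \<notin> gen_ideal N gs"
proof
  assume "1 \<in> gen_ideal N gs"
  from hc_0_gen_ideal[OF assms this] have "hc 0 (1::'a mpoly) = 0" .
  moreover have "hc 0 (1::'a mpoly) = 1" by (rule hc_homogeneous_same[OF homogeneous_1])
  ultimately show False by simp
qed

lemma gen_ideal_ne_PR:
  assumes "poshoms (gs :: 'a::field mpoly list)"
  shows "gen_ideal N gs \<noteq> PR N"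
  using one_notin_gen_ideal[OF assms] PR_1 by blast

definition nzd :: "nat \<Rightarrow> 'a::comm_ring_1 mpoly set \<Rightarrow> 'a mpoly \<Rightarrow> bool" where
  "nzd N I x \<longleftrightarrow> (\<forall>f\<in>PR N. f * x \<in> I \<longrightarrow> f \<in> I)"

definition reg :: "nat \<Rightarrow> 'a::comm_ring_1 mpoly list \<Rightarrow> bool" where
  "reg N gs \<longleftrightarrow> (\<forall>i<length gs. nzd N (gen_ideal N (take i gs)) (gs ! i))"

lemma regular_seq_iff: "regular_seq N gs \<longleftrightarrow> set gs \<subseteq> PR N \<and> gen_ideal N gs \<noteq> PR N \<and> reg N gs"
  by (simp add: regular_seq_def reg_def nzd_def)

lemma swap_nzd:
  fixes x y :: "'a::comm_ring_1 mpoly"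
  assumes a: "set a \<subseteq> PR N" "homs a"
    and x: "x \<in> PR N" "homogeneous dx x" "dx > 0"
    and y: "y \<in> PR N" "homogeneous dy y"
    and nx: "nzd N (gen_ideal N a) x" and ny: "nzd N (gen_ideal N (a @ [x])) y"
  shows "nzd N (gen_ideal N a) y" "nzd N (gen_ideal N (a @ [y])) x"
proof -
  let ?I = "gen_ideal N a"
  have Isub: "?I \<subseteq> gen_ideal N (a @ [x])" by (rule gen_ideal_mono) auto
  have H: "\<forall>m. m \<in> PR N \<longrightarrow> homogeneous d m \<longrightarrow> m * y \<in> ?I \<longrightarrow> m \<in> ?I" for d
  proof (induction d rule: less_induct)
    case (less d)
    show ?case
    proof safe
      fix m assume m: "m \<in> PR N" "homogeneous d m" "m * y \<in> ?I"
      then have "m \<in> gen_ideal N (a @ [x])" using ny Isub unfolding nzd_def by blast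
      then obtain i c where ic: "m = i + c * x" "i \<in> ?I" "c \<in> PR N"
        unfolding gen_ideal_snoc by blast
      have hi: "hc d i \<in> ?I" by (rule gen_ideal_hc[OF a(2) ic(2)])
      have mdec: "m = hc d i + (if dx \<le> d then hc (d - dx) c * x else 0)"
        using hc_homogeneous_same[OF m(2)] ic(1) by (simp add: hc_add hc_mult_hom[OF x(2)])
      show "m \<in> ?I"
      proof (cases "dx \<le> d")
        case False then show ?thesis using mdec hi by simp
      next
        case True
        let ?m' = "hc (d - dx) c"
        have m': "?m' \<in> PR N" "homogeneous (d - dx) ?m'" using ic(3) by (auto simp: PR_hc homogeneous_hc)
        have "(?m' * y) * x = m * y - hc d i * y"
          using mdec True by (simp add: algebra_simps)
        also have "\<dots> \<in> ?I"
          by (rule gen_ideal_diff[OF m(3)]) (simp add: mult.commute gen_ideal_mult[OF y(1) hi])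
        finally have "?m' * y \<in> ?I"
          using nx m' y(1) PR_mult unfolding nzd_def by blast
        then have "?m' \<in> ?I" using less.IH[of "d - dx"] True x(3) m' by auto
        then show ?thesis using mdec True hi
          by (simp add: gen_ideal_add gen_ideal_mult mult.commute x(1))
      qed
    qed
  qed
  show ny': "nzd N ?I y" unfolding nzd_def
  proof safe
    fix f assume f: "f \<in> PR N" "f * y \<in> ?I"
    have "hc e f \<in> ?I" for e
    proof -
      have "hc (e + dy) (f * y) \<in> ?I" by (rule gen_ideal_hc[OF a(2) f(2)])
      then have "hc e f * y \<in> ?I" by (simp add: hc_mult_hom[OF y(2)])
      then show ?thesis using H[of e] f(1) by (simp add: PR_hc homogeneous_hc)
    qed
    then show "f \<in> ?I" by (subst hc_decomp) (rule gen_ideal_sum)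
  qed
  show "nzd N (gen_ideal N (a @ [y])) x" unfolding nzd_def
  proof safe
    fix f assume f: "f \<in> PR N" "f * x \<in> gen_ideal N (a @ [y])"
    then obtain i c where ic: "f * x = i + c * y" "i \<in> ?I" "c \<in> PR N"
      unfolding gen_ideal_snoc by blast
    have "c * y = f * x - i" using ic(1) by simp
    also have "\<dots> \<in> gen_ideal N (a @ [x])"
      by (rule gen_ideal_diff) (use Isub ic(2) gen_ideal_snoc_mem[OF gen_ideal_0[of N a] f(1), of x] in auto)
    finally have "c \<in> gen_ideal N (a @ [x])" using ny ic(3) unfolding nzd_def by blast
    then obtain i' c' where ic': "c = i' + c' * x" "i' \<in> ?I" "c' \<in> PR N"
      unfolding gen_ideal_snoc by blast
    have "(f - c' * y) * x = i + i' * y"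
      using ic(1) ic'(1) by (simp add: algebra_simps)
    also have "\<dots> \<in> ?I"
      using gen_ideal_add[OF ic(2) gen_ideal_mult[OF y(1) ic'(2)]] by (simp add: mult.commute)
    finally have "f - c' * y \<in> ?I"
      using nx f(1) ic'(3) y(1) unfolding nzd_def by (meson PR_diff PR_mult)
    then have "(f - c' * y) + c' * y \<in> gen_ideal N (a @ [y])"
      using ic'(3) by (rule gen_ideal_snoc_mem)
    then show "f \<in> gen_ideal N (a @ [y])" by simp
  qed
qed

lemma reg_swap:
  fixes x y :: "'a::comm_ring_1 mpoly"
  assumes r: "reg N (a @ [x, y] @ b)" and P: "set (a @ [x, y] @ b) \<subseteq> PR N"
    and ph: "poshoms (a @ [x, y] @ b)"
  shows "reg N (a @ [y, x] @ b)"
  unfolding reg_def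
proof (intro allI impI)
  let ?L = "a @ [x, y] @ b" and ?L' = "a @ [y, x] @ b"
  fix i assume i: "i < length ?L'"
  have H: "nzd N (gen_ideal N (take i ?L)) (?L ! i)" if "i < length ?L" for i
    using r that unfolding reg_def by blast
  have aP: "set a \<subseteq> PR N" and ah: "homs a" using P ph by (auto simp: homs_def poshoms_def)
  obtain dx where dx: "dx > 0" "homogeneous dx x" using ph by (auto simp: poshoms_def)
  obtain dy where dy: "homogeneous dy y" using ph by (auto simp: poshoms_def)
  have xP: "x \<in> PR N" and yP: "y \<in> PR N" using P by auto
  have H0: "nzd N (gen_ideal N a) x" using H[of "length a"] by (simp add: nth_append)
  have H1: "nzd N (gen_ideal N (a @ [x])) y"
    using H[of "Suc (length a)"] by (simp add: nth_append take_append)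
  consider "i < length a" | "i = length a" | "i = Suc (length a)" | k where "i = length a + 2 + k"
    by (metis add_2_eq_Suc' add_Suc_right le_add_diff_inverse linorder_not_less
        Suc_lessI less_Suc_eq)
  then show "nzd N (gen_ideal N (take i ?L')) (?L' ! i)"
  proof cases
    case 1
    then show ?thesis using H[of i] by (simp add: nth_append take_append)
  next
    case 2
    then show ?thesis using swap_nzd(1)[OF aP ah xP dx(2) dx(1) yP dy H0 H1] by (simp add: nth_append)
  next
    case 3
    then show ?thesis using swap_nzd(2)[OF aP ah xP dx(2) dx(1) yP dy H0 H1]
      by (simp add: nth_append take_append)
  next
    case 4
    then have "take i ?L' = a @ [y, x] @ take k b" "take i ?L = a @ [x, y] @ take k b"
      "?L' ! i = ?L ! i" "i < length ?L"
      using i by (simp_all add: nth_append take_append numeral_2_eq_2)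
    moreover have "gen_ideal N (a @ [y, x] @ take k b) = gen_ideal N (a @ [x, y] @ take k b)"
      by (rule gen_ideal_set_eq) auto
    ultimately show ?thesis using H[of i] by simp
  qed
qed

lemma reg_move_end:
  fixes x :: "'a::comm_ring_1 mpoly"
  assumes "reg N (a @ [x] @ b)" "set (a @ [x] @ b) \<subseteq> PR N" "poshoms (a @ [x] @ b)"
  shows "reg N (a @ b @ [x])"
  using assms
proof (induction b arbitrary: a)
  case Nil then show ?case by simp
next
  case (Cons y b)
  have "reg N (a @ [y, x] @ b)"
    by (rule reg_swap) (use Cons.prems in simp_all)
  then have "reg N ((a @ [y]) @ [x] @ b)" by simp
  then have "reg N ((a @ [y]) @ b @ [x])"
    by (rule Cons.IH) (use Cons.prems in \<open>auto simp: poshoms_def\<close>)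
  then show ?case by simp
qed

lemma reg_move_front:
  fixes x :: "'a::comm_ring_1 mpoly"
  assumes "reg N (a @ [x] @ b)" "set (a @ [x] @ b) \<subseteq> PR N" "poshoms (a @ [x] @ b)"
  shows "reg N ([x] @ a @ b)"
  using assms
proof (induction a arbitrary: b rule: rev_induct)
  case Nil then show ?case by simp
next
  case (snoc y a)
  have "reg N (a @ [x, y] @ b)"
    by (rule reg_swap) (use snoc.prems in simp_all)
  then have "reg N (a @ [x] @ (y # b))" by simp
  then have "reg N ([x] @ a @ (y # b))"
    by (rule snoc.IH) (use snoc.prems in \<open>auto simp: poshoms_def\<close>)
  then show ?case by simp
qed

definition mon :: "(nat \<Rightarrow> 'a::comm_ring_1 mpoly) \<Rightarrow> (nat \<Rightarrow>\<^sub>0 nat) \<Rightarrow> 'a mpoly" where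
  "mon \<sigma> m = (\<Prod>i\<in>Poly_Mapping.keys m. \<sigma> i ^ Poly_Mapping.lookup m i)"

lemma subst_mon: "subst \<sigma> p = (\<Sum>m\<in>Poly_Mapping.keys p. const (Poly_Mapping.lookup p m) * mon \<sigma> m)"
  by (simp add: subst_def mon_def)

lemma subst_superset:
  assumes "finite A" "Poly_Mapping.keys p \<subseteq> A"
  shows "subst \<sigma> p = (\<Sum>m\<in>A. const (Poly_Mapping.lookup p m) * mon \<sigma> m)"
  unfolding subst_mon by (rule sum.mono_neutral_left) (use assms in \<open>auto simp: in_keys_iff\<close>)

lemma mon_superset:
  assumes "finite A" "Poly_Mapping.keys m \<subseteq> A"
  shows "mon \<sigma> m = (\<Prod>i\<in>A. \<sigma> i ^ Poly_Mapping.lookup m i)"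
  unfolding mon_def by (rule prod.mono_neutral_left) (use assms in \<open>auto simp: in_keys_iff\<close>)

lemma mon_add: "mon \<sigma> (m + m') = mon \<sigma> m * mon \<sigma> m'"
proof -
  let ?A = "Poly_Mapping.keys m \<union> Poly_Mapping.keys m'"
  have "mon \<sigma> (m + m') = (\<Prod>i\<in>?A. \<sigma> i ^ Poly_Mapping.lookup (m + m') i)"
    by (rule mon_superset) (auto simp: keys_add_nat)
  also have "\<dots> = (\<Prod>i\<in>?A. \<sigma> i ^ Poly_Mapping.lookup m i) * (\<Prod>i\<in>?A. \<sigma> i ^ Poly_Mapping.lookup m' i)"
    by (simp add: lookup_add power_add prod.distrib)
  also have "\<dots> = mon \<sigma> m * mon \<sigma> m'"
    by (simp add: mon_superset[symmetric])
  finally show ?thesis .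
qed

lemma mon_0[simp]: "mon \<sigma> 0 = 1" by (simp add: mon_def)

lemma subst_0[simp]: "subst \<sigma> 0 = 0" by (simp add: subst_def)

lemma subst_add: "subst \<sigma> (p + q) = subst \<sigma> p + subst \<sigma> q"
proof -
  let ?A = "Poly_Mapping.keys p \<union> Poly_Mapping.keys q"
  have "subst \<sigma> (p + q) = (\<Sum>m\<in>?A. const (Poly_Mapping.lookup (p + q) m) * mon \<sigma> m)"
    by (rule subst_superset) (auto dest: subsetD[OF keys_add])
  also have "\<dots> = (\<Sum>m\<in>?A. const (Poly_Mapping.lookup p m) * mon \<sigma> m) + (\<Sum>m\<in>?A. const (Poly_Mapping.lookup q m) * mon \<sigma> m)"
    by (simp add: lookup_add const_add distrib_right sum.distrib)
  also have "\<dots> = subst \<sigma> p + subst \<sigma> q"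
    by (simp add: subst_superset[symmetric])
  finally show ?thesis .
qed

lemma subst_sum: "subst \<sigma> (sum f A) = (\<Sum>x\<in>A. subst \<sigma> (f x))"
  by (induction A rule: infinite_finite_induct) (auto simp: subst_add)

lemma subst_uminus: "subst \<sigma> (- p) = - subst \<sigma> p"
proof -
  have "subst \<sigma> p + subst \<sigma> (- p) = 0" using subst_add[of \<sigma> p "- p"] by simp
  then show ?thesis by (metis add.inverse_unique)
qed

lemma subst_diff: "subst \<sigma> (p - q) = subst \<sigma> p - subst \<sigma> q"
  by (simp only: diff_conv_add_uminus subst_add subst_uminus)

lemma subst_single: "subst \<sigma> (Poly_Mapping.single m c) = const c * mon \<sigma> m"
  by (simp add: subst_mon)

lemma subst_mult: "subst \<sigma> (p * q) = subst \<sigma> p * subst \<sigma> q"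
proof -
  let ?P = "Poly_Mapping.keys p" and ?Q = "Poly_Mapping.keys q"
  let ?lp = "Poly_Mapping.lookup p" and ?lq = "Poly_Mapping.lookup q"
  have "p * q = (\<Sum>a\<in>?P. Poly_Mapping.single a (?lp a)) * (\<Sum>b\<in>?Q. Poly_Mapping.single b (?lq b))"
    using arg_cong2[OF pm_expansion[of p] pm_expansion[of q], of "(*)"] .
  also have "\<dots> = (\<Sum>a\<in>?P. \<Sum>b\<in>?Q. Poly_Mapping.single (a + b) (?lp a * ?lq b))"
    by (simp add: sum_product mult_single)
  finally have pq: "p * q = \<dots>" .
  have "subst \<sigma> (p * q) = (\<Sum>a\<in>?P. \<Sum>b\<in>?Q. (const (?lp a) * mon \<sigma> a) * (const (?lq b) * mon \<sigma> b))"
    unfolding pq subst_sum subst_single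
    by (intro sum.cong refl) (simp only: const_mult mon_add mult_ac)
  also have "\<dots> = subst \<sigma> p * subst \<sigma> q"
    by (simp only: subst_mon sum_product)
  finally show ?thesis .
qed

lemma subst_const[simp]: "subst \<sigma> (const c) = const c"
  using subst_single[of \<sigma> 0 c] by (simp add: const_def[symmetric])

lemma subst_1[simp]: "subst \<sigma> 1 = 1"
  using subst_const[of \<sigma> 1] by simp

lemma subst_var[simp]: "subst \<sigma> (var i) = \<sigma> i"
  by (simp add: var_def subst_single mon_def)

lemma subst_prod: "subst \<sigma> (prod f A) = (\<Prod>x\<in>A. subst \<sigma> (f x))"
  by (induction A rule: infinite_finite_induct) (auto simp: subst_mult)

lemma subst_power: "subst \<sigma> (p ^ k) = subst \<sigma> p ^ k"
  by (induction k) (auto simp: subst_mult)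

lemma subst_mon_mon: "subst \<alpha> (mon \<beta> m) = mon (subst \<alpha> \<circ> \<beta>) m"
  by (simp add: mon_def subst_prod subst_power)

lemma subst_comp: "subst \<alpha> (subst \<beta> p) = subst (subst \<alpha> \<circ> \<beta>) p"
proof -
  have "subst \<alpha> (subst \<beta> p) = (\<Sum>m\<in>Poly_Mapping.keys p. subst \<alpha> (const (Poly_Mapping.lookup p m) * mon \<beta> m))"
    by (simp only: subst_mon[of \<beta> p] subst_sum)
  also have "\<dots> = (\<Sum>m\<in>Poly_Mapping.keys p. const (Poly_Mapping.lookup p m) * mon (subst \<alpha> \<circ> \<beta>) m)"
    by (simp only: subst_mult subst_const subst_mon_mon)
  also have "\<dots> = subst (subst \<alpha> \<circ> \<beta>) p"
    by (simp only: subst_mon[of "subst \<alpha> \<circ> \<beta>" p])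
  finally show ?thesis .
qed

lemma var_power: "var i ^ k = (Poly_Mapping.single (Poly_Mapping.single i k) 1 :: 'a::comm_ring_1 mpoly)"
proof (induction k)
  case (Suc k)
  have "var i ^ Suc k = Poly_Mapping.single (Poly_Mapping.single i k) 1 * (var i :: 'a mpoly)"
    by (simp add: Suc mult.commute)
  also have "\<dots> = Poly_Mapping.single (Poly_Mapping.single i k + Poly_Mapping.single i 1) 1"
    by (simp add: var_def mult_single)
  also have "\<dots> = Poly_Mapping.single (Poly_Mapping.single i (Suc k)) 1"
    by (simp only: single_add[symmetric] Suc_eq_plus1)
  finally show ?case .
qed simp

lemma prod_single1:
  "(\<Prod>x\<in>A. Poly_Mapping.single (f x) (1::'a::comm_ring_1)) = Poly_Mapping.single (sum f A) 1"
  by (induction A rule: infinite_finite_induct) (auto simp: mult_single)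

lemma mon_var: "mon var m = (Poly_Mapping.single m 1 :: 'a::comm_ring_1 mpoly)"
proof -
  have "mon var m = (\<Prod>i\<in>Poly_Mapping.keys m. (Poly_Mapping.single (Poly_Mapping.single i (Poly_Mapping.lookup m i)) 1 :: 'a mpoly))"
    by (simp add: mon_def var_power)
  also have "\<dots> = Poly_Mapping.single m 1"
    by (simp add: prod_single1 pm_expansion[of m, symmetric])
  finally show ?thesis .
qed

lemma subst_var_id: "subst var p = p"
proof -
  have "subst var p = (\<Sum>m\<in>Poly_Mapping.keys p. Poly_Mapping.single m (Poly_Mapping.lookup p m))"
    unfolding subst_mon mon_var by (simp only: single_const[symmetric])
  then show ?thesis by (simp only: pm_expansion[of p, symmetric])
qed

lemma subst_cong:
  assumes "p \<in> PR n" "\<And>i. i < n \<Longrightarrow> \<alpha> i = \<beta> i"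
  shows "subst \<alpha> p = subst \<beta> p"
proof -
  have "mon \<alpha> m = mon \<beta> m" if "m \<in> Poly_Mapping.keys p" for m
    unfolding mon_def
  proof (intro prod.cong refl)
    fix i assume "i \<in> Poly_Mapping.keys m"
    then have "i < n" using assms(1) that by (auto simp: PR_def)
    then show "\<alpha> i ^ Poly_Mapping.lookup m i = \<beta> i ^ Poly_Mapping.lookup m i" using assms(2) by simp
  qed
  then show ?thesis unfolding subst_mon by (intro sum.cong) auto
qed

lemma PR_mon: "Poly_Mapping.keys m \<subseteq> {..<N} \<Longrightarrow> (\<And>i. i < N \<Longrightarrow> \<sigma> i \<in> PR n) \<Longrightarrow> mon \<sigma> m \<in> PR n"
  unfolding mon_def by (auto intro!: PR_prod PR_power)

lemma PR_subst:
  assumes "p \<in> PR N" "\<And>i. i < N \<Longrightarrow> \<sigma> i \<in> PR n"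
  shows "subst \<sigma> p \<in> PR n"
  unfolding subst_mon
proof (rule PR_sum, rule PR_mult[OF PR_const PR_mon])
  fix m assume "m \<in> Poly_Mapping.keys p"
  then show "Poly_Mapping.keys m \<subseteq> {..<N}" using assms(1) by (auto simp: PR_def)
qed (use assms(2) in auto)

lemma homogeneous_mon:
  assumes "\<And>i. i \<in> Poly_Mapping.keys m \<Longrightarrow> homogeneous 1 (\<sigma> i)"
  shows "homogeneous (tdeg m) (mon \<sigma> m)"
  unfolding mon_def tdeg_def
proof (rule homogeneous_prod)
  fix i assume "i \<in> Poly_Mapping.keys m"
  then show "homogeneous (Poly_Mapping.lookup m i) (\<sigma> i ^ Poly_Mapping.lookup m i)"
    using homogeneous_power[OF assms, of i "Poly_Mapping.lookup m i"] by simp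
qed

lemma homogeneous_subst:
  assumes "p \<in> Hom N d" "\<And>i. i < N \<Longrightarrow> \<sigma> i \<in> Hom n 1"
  shows "subst \<sigma> p \<in> Hom n d"
proof -
  have "homogeneous d (subst \<sigma> p)"
    unfolding subst_mon
  proof (intro homogeneous_sum homogeneous_const_mult)
    fix m assume m: "m \<in> Poly_Mapping.keys p"
    then have "tdeg m = d" "Poly_Mapping.keys m \<subseteq> {..<N}" using assms(1) by (auto simp: Hom_iff homogeneous_def PR_def)
    then show "homogeneous d (mon \<sigma> m)"
      using homogeneous_mon[of m \<sigma>] assms(2) by (auto simp: Hom_iff)
  qed
  moreover have "subst \<sigma> p \<in> PR n"
    by (rule PR_subst) (use assms in \<open>auto simp: Hom_iff\<close>)
  ultimately show ?thesis by (simp add: Hom_iff)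
qed

lemma cong_mult:
  assumes I: "set gs \<subseteq> PR N"
    and P: "a \<in> PR N" "b \<in> PR N" "c \<in> PR N" "d \<in> PR N"
    and "a - b \<in> gen_ideal N gs" "c - d \<in> gen_ideal N gs"
  shows "a * c - b * d \<in> gen_ideal N gs"
proof -
  have "a * c - b * d = a * (c - d) + d * (a - b)" by (simp add: algebra_simps)
  then show ?thesis using assms by (simp add: gen_ideal_add gen_ideal_mult)
qed

lemma cong_power:
  assumes I: "set gs \<subseteq> PR N" and P: "a \<in> PR N" "b \<in> PR N" and "a - b \<in> gen_ideal N gs"
  shows "a ^ k - b ^ k \<in> gen_ideal N gs"
proof (induction k)
  case (Suc k)
  have "a * a ^ k - b * b ^ k \<in> gen_ideal N gs"
    by (rule cong_mult[OF I P(1) P(2) PR_power[OF P(1)] PR_power[OF P(2)] assms(4) Suc])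
  then show ?case by simp
qed simp

lemma cong_prod:
  assumes I: "set gs \<subseteq> PR N" and P: "\<And>x. x \<in> A \<Longrightarrow> f x \<in> PR N \<and> g x \<in> PR N \<and> f x - g x \<in> gen_ideal N gs"
  shows "prod f A - prod g A \<in> gen_ideal N gs"
  using P
proof (induction A rule: infinite_finite_induct)
  case (insert x F)
  then show ?case by (auto intro!: cong_mult[OF I] PR_prod)
qed auto

lemma subst_congr_ideal:
  assumes I: "set gs \<subseteq> PR N" and p: "p \<in> PR N"
    and ab: "\<And>i. i < N \<Longrightarrow> \<alpha> i \<in> PR N \<and> \<beta> i \<in> PR N \<and> \<alpha> i - \<beta> i \<in> gen_ideal N gs"
  shows "subst \<alpha> p - subst \<beta> p \<in> gen_ideal N gs"
proof -
  have "mon \<alpha> m - mon \<beta> m \<in> gen_ideal N gs" if "m \<in> Poly_Mapping.keys p" for m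
    unfolding mon_def
  proof (rule cong_prod[OF I])
    fix i assume "i \<in> Poly_Mapping.keys m"
    then have "i < N" using p that by (auto simp: PR_def)
    then show "\<alpha> i ^ Poly_Mapping.lookup m i \<in> PR N \<and> \<beta> i ^ Poly_Mapping.lookup m i \<in> PR N \<and>
      \<alpha> i ^ Poly_Mapping.lookup m i - \<beta> i ^ Poly_Mapping.lookup m i \<in> gen_ideal N gs"
      using ab[of i] by (auto intro!: cong_power[OF I] PR_power)
  qed
  then have "(\<Sum>m\<in>Poly_Mapping.keys p. const (Poly_Mapping.lookup p m) * (mon \<alpha> m - mon \<beta> m)) \<in> gen_ideal N gs"
    by (intro gen_ideal_sum gen_ideal_mult) auto
  then show ?thesis
    by (simp add: subst_mon right_diff_distrib sum_subtractf)
qed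

lemma tdeg_1:
  assumes "tdeg m = 1"
  shows "\<exists>i. m = Poly_Mapping.single i 1"
proof -
  have ne: "Poly_Mapping.keys m \<noteq> {}" using assms by (auto simp: tdeg_def)
  then obtain i where i: "i \<in> Poly_Mapping.keys m" by blast
  have "1 = Poly_Mapping.lookup m i + (\<Sum>j\<in>Poly_Mapping.keys m - {i}. Poly_Mapping.lookup m j)"
    using assms i unfolding tdeg_def by (simp add: sum.remove)
  moreover have "Poly_Mapping.lookup m i \<ge> 1" using i by (simp add: in_keys_iff)
  ultimately have li: "Poly_Mapping.lookup m i = 1" and rest: "(\<Sum>j\<in>Poly_Mapping.keys m - {i}. Poly_Mapping.lookup m j) = 0"
    by linarith+
  have "Poly_Mapping.keys m - {i} = {}"
  proof (rule ccontr)
    assume "Poly_Mapping.keys m - {i} \<noteq> {}"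
    then obtain j where "j \<in> Poly_Mapping.keys m - {i}" by blast
    then have j: "j \<in> Poly_Mapping.keys m" "j \<noteq> i" by auto
    have "\<forall>x\<in>Poly_Mapping.keys m - {i}. Poly_Mapping.lookup m x = 0"
      using rest by (subst (asm) sum_eq_0_iff) auto
    then have "Poly_Mapping.lookup m j = 0" using j by blast
    then show False using j(1) by (simp add: in_keys_iff)
  qed
  then have "Poly_Mapping.keys m = {i}" using i by blast
  have "m = (\<Sum>j\<in>Poly_Mapping.keys m. Poly_Mapping.single j (Poly_Mapping.lookup m j))" by (rule pm_expansion)
  also have "\<dots> = Poly_Mapping.single i 1" using \<open>Poly_Mapping.keys m = {i}\<close> li by simp
  finally show ?thesis ..
qed

lemma homogeneous_var_Suc: "homogeneous (Suc 0) (var i)"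
  using homogeneous_var[of i] by simp

definition coef :: "'a::comm_ring_1 mpoly \<Rightarrow> nat \<Rightarrow> 'a" where
  "coef z i = Poly_Mapping.lookup z (Poly_Mapping.single i 1)"

lemma var_const: "Poly_Mapping.single (Poly_Mapping.single i 1) c = const c * var i"
  unfolding var_def by (rule single_const)

lemma linear_form:
  assumes "z \<in> Hom N 1"
  shows "z = (\<Sum>i<N. const (coef z i) * var i)"
proof -
  let ?A = "(\<lambda>i. Poly_Mapping.single i (1::nat)) ` {..<N}"
  have "Poly_Mapping.keys z \<subseteq> ?A"
  proof
    fix m assume m: "m \<in> Poly_Mapping.keys z"
    then have "tdeg m = 1" "Poly_Mapping.keys m \<subseteq> {..<N}" using assms by (auto simp: Hom_iff homogeneous_def PR_def)
    then obtain i where "m = Poly_Mapping.single i 1" using tdeg_1 by blast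
    moreover have "i < N" using \<open>Poly_Mapping.keys m \<subseteq> {..<N}\<close> calculation by simp
    ultimately show "m \<in> ?A" by blast
  qed
  then have "z = (\<Sum>m\<in>?A. Poly_Mapping.single m (Poly_Mapping.lookup z m))"
    by (rule pm_expansion_superset[rotated]) simp
  also have "\<dots> = (\<Sum>i<N. Poly_Mapping.single (Poly_Mapping.single i 1) (coef z i))"
  proof -
    have inj: "inj_on (\<lambda>i. Poly_Mapping.single i (1::nat)) {..<N}"
      unfolding inj_on_def
    proof (intro ballI impI)
      fix i j assume "Poly_Mapping.single i (1::nat) = Poly_Mapping.single j 1"
      then have "Poly_Mapping.lookup (Poly_Mapping.single i (1::nat)) i = Poly_Mapping.lookup (Poly_Mapping.single j 1) i" by simp
      then show "i = j" by (auto simp: Poly_Mapping.lookup_single when_def split: if_splits)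
    qed
    show ?thesis unfolding sum.reindex[OF inj] by (simp add: coef_def)
  qed
  also have "\<dots> = (\<Sum>i<N. const (coef z i) * var i)" by (simp only: var_const)
  finally show ?thesis .
qed

definition idx :: "nat \<Rightarrow> nat \<Rightarrow> nat" where
  "idx k j = (if j < k then j else Suc j)"

lemma sum_split_idx:
  assumes "k < Suc n"
  shows "(\<Sum>i<Suc n. f i) = f k + (\<Sum>j<n. f (idx k j))"
proof -
  have bij: "bij_betw (idx k) {..<n} ({..<Suc n} - {k})"
    unfolding bij_betw_def
  proof
    show "inj_on (idx k) {..<n}" by (auto simp: inj_on_def idx_def split: if_splits)
    show "idx k ` {..<n} = {..<Suc n} - {k}"
    proof
      show "idx k ` {..<n} \<subseteq> {..<Suc n} - {k}" by (auto simp: idx_def)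
      show "{..<Suc n} - {k} \<subseteq> idx k ` {..<n}"
      proof
        fix i assume i: "i \<in> {..<Suc n} - {k}"
        show "i \<in> idx k ` {..<n}"
        proof (cases "i < k")
          case True then show ?thesis using i assms by (intro image_eqI[of _ _ i]) (auto simp: idx_def)
        next
          case False then show ?thesis using i by (intro image_eqI[of _ _ "i - 1"]) (auto simp: idx_def)
        qed
      qed
    qed
  qed
  have "(\<Sum>i<Suc n. f i) = f k + (\<Sum>i\<in>{..<Suc n} - {k}. f i)"
    using assms by (intro sum.remove) auto
  also have "(\<Sum>i\<in>{..<Suc n} - {k}. f i) = (\<Sum>j<n. f (idx k j))"
    using sum.reindex_bij_betw[OF bij, of f] by simp
  finally show ?thesis .
qed

definition tau :: "nat \<Rightarrow> nat \<Rightarrow> 'a::comm_ring_1 mpoly" where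
  "tau k j = var (idx k j)"

definition sig :: "'a::field mpoly \<Rightarrow> nat \<Rightarrow> nat \<Rightarrow> nat \<Rightarrow> 'a mpoly" where
  "sig z n k i = (if i = k then - (\<Sum>j<n. const (coef z (idx k j) / coef z k) * var j)
     else if i < k then var i else var (i - 1))"

locale coord =
  fixes z :: "'a::field mpoly" and n k :: nat
  assumes z: "z \<in> Hom (Suc n) 1" and k: "k < Suc n" and ak: "coef z k \<noteq> 0"
begin

abbreviation "\<sigma> \<equiv> sig z n k"
abbreviation "\<tau> \<equiv> (tau k :: nat \<Rightarrow> 'a mpoly)"

lemma sig_Hom: "i < Suc n \<Longrightarrow> \<sigma> i \<in> Hom n 1"
proof -
  assume i: "i < Suc n"
  have v: "j < n \<Longrightarrow> var j \<in> Hom n 1" for j unfolding Hom_iff using PR_var homogeneous_var by blast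
  have s: "(\<Sum>j<n. const (coef z (idx k j) / coef z k) * var j) \<in> Hom n 1"
    by (auto simp: Hom_iff intro!: PR_sum PR_mult PR_var homogeneous_sum homogeneous_const_mult homogeneous_var_Suc)
  show ?thesis
  proof (cases "i = k")
    case True then show ?thesis using s by (simp add: sig_def Hom_iff PR_uminus homogeneous_uminus)
  next
    case False
    then have "\<sigma> i = var (if i < k then i else i - 1)" "(if i < k then i else i - 1) < n"
      using i k by (auto simp: sig_def)
    then show ?thesis using v by metis
  qed
qed

lemma sig_PR: "i < Suc n \<Longrightarrow> \<sigma> i \<in> PR n"
  using sig_Hom by (simp add: Hom_iff)

lemma tau_PR: "j < n \<Longrightarrow> \<tau> j \<in> PR (Suc n)"
  by (auto simp: tau_def idx_def intro!: PR_var)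

lemma sig_tau: "j < n \<Longrightarrow> subst \<sigma> (\<tau> j) = var j"
  by (auto simp: tau_def idx_def sig_def)

lemma sig_tau_id: "g \<in> PR n \<Longrightarrow> subst \<sigma> (subst \<tau> g) = g"
proof -
  assume g: "g \<in> PR n"
  have "subst \<sigma> (subst \<tau> g) = subst (subst \<sigma> \<circ> \<tau>) g" by (rule subst_comp)
  also have "\<dots> = subst var g" by (rule subst_cong[OF g]) (simp add: sig_tau)
  finally show ?thesis by (simp add: subst_var_id)
qed

lemma z_split: "z = const (coef z k) * var k + (\<Sum>j<n. const (coef z (idx k j)) * var (idx k j))"
proof -
  have "z = (\<Sum>i<Suc n. const (coef z i) * var i)" by (rule linear_form[OF z])
  also have "\<dots> = const (coef z k) * var k + (\<Sum>j<n. const (coef z (idx k j)) * var (idx k j))"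
    by (rule sum_split_idx[OF k])
  finally show ?thesis .
qed

lemma sig_z: "subst \<sigma> z = 0"
proof -
  have "subst \<sigma> z = subst \<sigma> (const (coef z k) * var k + (\<Sum>j<n. const (coef z (idx k j)) * var (idx k j)))"
    using arg_cong[OF z_split, of "subst \<sigma>"] .
  also have "\<dots> = const (coef z k) * \<sigma> k + (\<Sum>j<n. const (coef z (idx k j)) * \<sigma> (idx k j))"
    by (simp only: subst_add subst_sum subst_mult subst_const subst_var)
  also have "(\<Sum>j<n. const (coef z (idx k j)) * \<sigma> (idx k j)) = (\<Sum>j<n. const (coef z (idx k j)) * var j)"
    by (rule sum.cong) (auto simp: sig_def idx_def)
  also have "const (coef z k) * \<sigma> k = - (\<Sum>j<n. const (coef z k) * const (coef z (idx k j) / coef z k) * var j)"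
    by (simp add: sig_def sum_distrib_left mult.assoc)
  also have "(\<Sum>j<n. const (coef z k) * const (coef z (idx k j) / coef z k) * var j) = (\<Sum>j<n. const (coef z (idx k j)) * var j)"
    using ak by (intro sum.cong refl) (simp add: const_mult[symmetric])
  finally show ?thesis by simp
qed

lemma tau_sig: "i < Suc n \<Longrightarrow> subst \<tau> (\<sigma> i) - var i \<in> gen_ideal (Suc n) [z]"
proof -
  assume i: "i < Suc n"
  show ?thesis
  proof (cases "i = k")
    case False
    have "subst \<tau> (\<sigma> i) = var i" using False i by (auto simp: sig_def tau_def idx_def)
    then show ?thesis by simp
  next
    case True
    let ?S = "\<Sum>j<n. const (coef z (idx k j)) * var (idx k j)"
    have s1: "subst \<tau> (\<sigma> k) = - (\<Sum>j<n. const (coef z (idx k j) / coef z k) * var (idx k j))"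
      by (simp add: sig_def subst_uminus subst_sum subst_mult tau_def)
    have s2: "(\<Sum>j<n. const (coef z (idx k j) / coef z k) * var (idx k j)) = const (inverse (coef z k)) * ?S"
      by (simp add: sum_distrib_left const_mult divide_inverse mult_ac)
    have s3: "?S = z - const (coef z k) * var k"
      by (metis add_diff_cancel_left' z_split)
    have s4: "const (inverse (coef z k)) * (z - const (coef z k) * var k) = const (inverse (coef z k)) * z - var k"
      using ak by (simp add: right_diff_distrib mult.assoc[symmetric] const_mult[symmetric])
    have "subst \<tau> (\<sigma> k) - var k = const (- inverse (coef z k)) * z"
      unfolding s1 s2 s3 s4 by (simp add: const_uminus)
    moreover have "const (- inverse (coef z k)) * z \<in> gen_ideal (Suc n) [z]"
      by (rule gen_ideal_mult[OF PR_const gen_ideal_mem]) simp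
    ultimately show ?thesis using True by simp
  qed
qed

lemma kernel:
  assumes h: "h \<in> PR (Suc n)"
  shows "subst \<tau> (subst \<sigma> h) - h \<in> gen_ideal (Suc n) [z]"
proof -
  have zP: "set [z] \<subseteq> PR (Suc n)" using z by (simp add: Hom_iff)
  have "subst \<tau> (subst \<sigma> h) = subst (subst \<tau> \<circ> \<sigma>) h" by (rule subst_comp)
  moreover have "subst (subst \<tau> \<circ> \<sigma>) h - subst var h \<in> gen_ideal (Suc n) [z]"
  proof (rule subst_congr_ideal[OF zP h])
    fix i assume i: "i < Suc n"
    show "(subst \<tau> \<circ> \<sigma>) i \<in> PR (Suc n) \<and> var i \<in> PR (Suc n) \<and> (subst \<tau> \<circ> \<sigma>) i - var i \<in> gen_ideal (Suc n) [z]"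
      using i tau_sig[OF i] by (auto intro!: PR_subst[OF sig_PR] tau_PR PR_var)
  qed
  ultimately show ?thesis by (simp add: subst_var_id)
qed

lemma image_PR: "subst \<sigma> ` PR (Suc n) = PR n"
proof
  show "subst \<sigma> ` PR (Suc n) \<subseteq> PR n" using PR_subst sig_PR by blast
  show "PR n \<subseteq> subst \<sigma> ` PR (Suc n)"
  proof
    fix g :: "'a mpoly" assume g: "g \<in> PR n"
    have "subst \<tau> g \<in> PR (Suc n)" using g by (rule PR_subst) (rule tau_PR)
    then show "g \<in> subst \<sigma> ` PR (Suc n)" using sig_tau_id[OF g] by (metis image_eqI)
  qed
qed

end

lemma gen_ideal_subst:
  assumes f: "f \<in> gen_ideal N gs" and s: "\<And>i. i < N \<Longrightarrow> \<sigma> i \<in> PR n"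
  shows "subst \<sigma> f \<in> gen_ideal n (map (subst \<sigma>) gs)"
proof -
  obtain c where c: "\<forall>i<length gs. c i \<in> PR N" "f = (\<Sum>i<length gs. c i * gs ! i)"
    using f unfolding gen_ideal_def by blast
  have "subst \<sigma> f = (\<Sum>i<length gs. subst \<sigma> (c i) * map (subst \<sigma>) gs ! i)"
    by (simp add: c subst_sum subst_mult)
  then show ?thesis unfolding gen_ideal_def using c(1) PR_subst[OF _ s]
    by (auto intro!: exI[of _ "\<lambda>i. subst \<sigma> (c i)"])
qed

context coord begin

lemma transfer_ideal:
  assumes G: "set G \<subseteq> PR (Suc n)" and f: "f \<in> PR (Suc n)"
  shows "subst \<sigma> f \<in> gen_ideal n (map (subst \<sigma>) G) \<longleftrightarrow> f \<in> gen_ideal (Suc n) (z # G)"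
proof
  assume "f \<in> gen_ideal (Suc n) (z # G)"
  then have "subst \<sigma> f \<in> gen_ideal n (map (subst \<sigma>) (z # G))"
    by (rule gen_ideal_subst) (rule sig_PR)
  also have "gen_ideal n (map (subst \<sigma>) (z # G)) \<subseteq> gen_ideal n (map (subst \<sigma>) G)"
    by (rule gen_ideal_subset) (auto simp: sig_z intro: gen_ideal_mem)
  finally show "subst \<sigma> f \<in> gen_ideal n (map (subst \<sigma>) G)" .
next
  assume "subst \<sigma> f \<in> gen_ideal n (map (subst \<sigma>) G)"
  then obtain d where d: "\<forall>i<length G. d i \<in> PR n" "subst \<sigma> f = (\<Sum>i<length G. d i * map (subst \<sigma>) G ! i)"
    unfolding gen_ideal_def by auto
  define s where "s = (\<Sum>i<length G. subst \<tau> (d i) * G ! i)"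
  have sP: "s \<in> gen_ideal (Suc n) (z # G)"
    unfolding s_def
    by (intro gen_ideal_sum gen_ideal_mult gen_ideal_mem PR_subst[OF _ tau_PR]) (use d(1) in auto)
  have GP: "set (z # G) \<subseteq> PR (Suc n)" using G z by (simp add: Hom_iff)
  define h where "h = f - s"
  have hP: "h \<in> PR (Suc n)" unfolding h_def using f sP gen_ideal_PR[OF GP] by (blast intro: PR_diff)
  have "subst \<sigma> s = (\<Sum>i<length G. d i * map (subst \<sigma>) G ! i)"
    unfolding s_def using d(1) by (simp add: subst_sum subst_mult sig_tau_id)
  then have "subst \<sigma> h = 0" unfolding h_def by (simp add: subst_diff d(2))
  then have "- h \<in> gen_ideal (Suc n) [z]" using kernel[OF hP] by simp
  then have "h \<in> gen_ideal (Suc n) [z]" using gen_ideal_uminus by fastforce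
  also have "gen_ideal (Suc n) [z] \<subseteq> gen_ideal (Suc n) (z # G)" by (rule gen_ideal_mono) auto
  finally have "h + s \<in> gen_ideal (Suc n) (z # G)" using sP by (rule gen_ideal_add)
  then show "f \<in> gen_ideal (Suc n) (z # G)" by (simp add: h_def)
qed

end

lemma reg_snoc: "reg N (L @ [x]) \<longleftrightarrow> reg N L \<and> nzd N (gen_ideal N L) x"
proof -
  have "reg N (L @ [x]) \<longleftrightarrow> (\<forall>i<Suc (length L). nzd N (gen_ideal N (take i (L @ [x]))) ((L @ [x]) ! i))"
    by (simp add: reg_def)
  also have "\<dots> \<longleftrightarrow> (\<forall>i<length L. nzd N (gen_ideal N (take i (L @ [x]))) ((L @ [x]) ! i)) \<and>
      nzd N (gen_ideal N (take (length L) (L @ [x]))) ((L @ [x]) ! length L)"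
    by (simp add: less_Suc_eq conj_commute all_conj_distrib)
  also have "\<dots> \<longleftrightarrow> reg N L \<and> nzd N (gen_ideal N L) x"
    by (simp add: reg_def nth_append)
  finally show ?thesis .
qed

lemma reg_Cons_Suc:
  assumes "reg N (x # L)" "i < length L"
  shows "nzd N (gen_ideal N (x # take i L)) (L ! i)"
proof -
  have "Suc i < length (x # L)" using assms(2) by simp
  with assms(1) have "nzd N (gen_ideal N (take (Suc i) (x # L))) ((x # L) ! Suc i)"
    unfolding reg_def by blast
  then show ?thesis by simp
qed

lemma gen_ideal_replace:
  assumes "x \<in> gen_ideal N (A @ [q] @ C)" "q \<in> gen_ideal N (A @ [x] @ C)"
  shows "gen_ideal N (A @ [x] @ C) = gen_ideal N (A @ [q] @ C)"
proof
  show "gen_ideal N (A @ [x] @ C) \<subseteq> gen_ideal N (A @ [q] @ C)"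
    by (rule gen_ideal_subset) (use assms(1) in \<open>auto intro: gen_ideal_mem\<close>)
  show "gen_ideal N (A @ [q] @ C) \<subseteq> gen_ideal N (A @ [x] @ C)"
    by (rule gen_ideal_subset) (use assms(2) in \<open>auto intro: gen_ideal_mem\<close>)
qed

lemma nzd_factor:
  assumes "nzd N (gen_ideal N L) (z * w)" "z \<in> PR N"
  shows "nzd N (gen_ideal N L) w"
  unfolding nzd_def
proof safe
  fix g assume g: "g \<in> PR N" "g * w \<in> gen_ideal N L"
  then have "g * (z * w) \<in> gen_ideal N L"
    using gen_ideal_mult[OF assms(2) g(2)] by (simp add: mult_ac)
  then show "g \<in> gen_ideal N L" using assms(1) g(1) unfolding nzd_def by blast
qed

lemma reg_replace:
  fixes q :: "'a::field mpoly"
  assumes r: "reg N (A @ [q] @ B)" and P: "set (A @ [q] @ B) \<subseteq> PR N"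
    and x: "x = a0 + const c * q" and a0: "a0 \<in> gen_ideal N A" and c: "c \<noteq> 0"
  shows "reg N (A @ [x] @ B)"
  unfolding reg_def
proof (intro allI impI)
  let ?L = "A @ [q] @ B" and ?L' = "A @ [x] @ B"
  fix i assume i: "i < length ?L'"
  have H: "nzd N (gen_ideal N (take i ?L)) (?L ! i)" if "i < length ?L" for i
    using r that unfolding reg_def by blast
  have mono: "gen_ideal N A \<subseteq> gen_ideal N (A @ C)" for C by (rule gen_ideal_mono) auto
  have qP: "q \<in> PR N" using P by auto
  have xin: "x \<in> gen_ideal N (A @ [q] @ C)" for C
  proof -
    have "a0 \<in> gen_ideal N (A @ [q] @ C)" using mono[of "[q] @ C"] a0 by blast
    moreover have "const c * q \<in> gen_ideal N (A @ [q] @ C)"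
      by (rule gen_ideal_mult[OF PR_const gen_ideal_mem]) simp
    ultimately show ?thesis by (simp add: x gen_ideal_add)
  qed
  have "q = const (inverse c) * (x - a0)" using c by (simp add: x mult.assoc[symmetric] const_mult[symmetric])
  then have qin: "q \<in> gen_ideal N (A @ [x] @ C)" for C
  proof -
    assume qq: "q = const (inverse c) * (x - a0)"
    have "a0 \<in> gen_ideal N (A @ [x] @ C)" using mono[of "[x] @ C"] a0 by blast
    moreover have "x \<in> gen_ideal N (A @ [x] @ C)" by (rule gen_ideal_mem) simp
    ultimately show ?thesis unfolding qq by (intro gen_ideal_mult[OF PR_const] gen_ideal_diff)
  qed
  have "i < length A \<or> i = length A \<or> (\<exists>k. i = Suc (length A) + k)" by presburger
  then consider "i < length A" | "i = length A" | k where "i = Suc (length A) + k" by blast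
  then show "nzd N (gen_ideal N (take i ?L')) (?L' ! i)"
  proof cases
    case 1
    then show ?thesis using H[of i] by (simp add: nth_append)
  next
    case 2
    have hq: "nzd N (gen_ideal N A) q" using H[of "length A"] by (simp add: nth_append)
    show ?thesis unfolding nzd_def
    proof safe
      fix f assume f: "f \<in> PR N" "f * ?L' ! i \<in> gen_ideal N (take i ?L')"
      then have fx: "f * x \<in> gen_ideal N A" using 2 by (simp add: nth_append)
      have "(f * const c) * q = f * x - f * a0" by (simp add: x algebra_simps)
      also have "\<dots> \<in> gen_ideal N A" using fx a0 f(1) by (simp add: gen_ideal_diff gen_ideal_mult)
      finally have "f * const c \<in> gen_ideal N A" using hq f(1) unfolding nzd_def by (meson PR_mult PR_const)
      then have "const (inverse c) * (f * const c) \<in> gen_ideal N A" by (rule gen_ideal_mult[OF PR_const])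
      moreover have "const (inverse c) * (f * const c) = f"
      proof -
        have "const (inverse c) * (f * const c) = f * (const (inverse c) * const c)" by (simp only: mult_ac)
        also have "\<dots> = f" using c by (simp add: const_mult[symmetric])
        finally show ?thesis .
      qed
      ultimately show "f \<in> gen_ideal N (take i ?L')" using 2 by simp
    qed
  next
    case 3
    then have "take i ?L' = A @ [x] @ take k B" "take i ?L = A @ [q] @ take k B" "?L' ! i = ?L ! i"
      "i < length ?L" using i by (simp_all add: nth_append)
    moreover have "gen_ideal N (A @ [x] @ take k B) = gen_ideal N (A @ [q] @ take k B)"
      by (rule gen_ideal_replace[OF xin qin])
    ultimately show ?thesis using H[of i] by simp
  qed
qed

lemma Hom_poshoms: "(\<And>g. g \<in> set L \<Longrightarrow> \<exists>d>0. g \<in> Hom N d) \<Longrightarrow> poshoms L"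
  by (auto simp: poshoms_def Hom_iff)

lemma gen_ideal_hom_scalars:
  fixes gs :: "'a::field mpoly list"
  assumes p: "p \<in> gen_ideal N gs" "homogeneous d p" and g: "set gs \<subseteq> Hom N d"
  shows "\<exists>b. p = (\<Sum>i<length gs. const (b i) * gs ! i)"
proof -
  obtain c where c: "\<forall>i<length gs. c i \<in> PR N" "p = (\<Sum>i<length gs. c i * gs ! i)"
    using p unfolding gen_ideal_def by blast
  have "p = hc d p" using hc_homogeneous_same[OF p(2)] by simp
  also have "\<dots> = (\<Sum>i<length gs. hc d (c i * gs ! i))" by (simp add: c(2) hc_sum)
  also have "\<dots> = (\<Sum>i<length gs. const (Poly_Mapping.lookup (c i) 0) * gs ! i)"
  proof (rule sum.cong[OF refl])
    fix i assume "i \<in> {..<length gs}"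
    then have "gs ! i \<in> Hom N d" using g nth_mem[of i gs] by auto
    then have "homogeneous d (gs ! i)" by (simp add: Hom_iff)
    then show "hc d (c i * gs ! i) = const (Poly_Mapping.lookup (c i) 0) * gs ! i"
      by (simp add: hc_mult_hom hc_zero_const)
  qed
  finally show ?thesis by (rule exI[of _ "\<lambda>i. Poly_Mapping.lookup (c i) 0"])
qed

lemma poshoms12:
  assumes "set L \<subseteq> Hom N 1 \<union> Hom N 2"
  shows "poshoms L"
proof (rule Hom_poshoms)
  fix g assume "g \<in> set L"
  with assms have "g \<in> Hom N 1 \<or> g \<in> Hom N 2" by auto
  then show "\<exists>d>0. g \<in> Hom N d"
  proof
    assume "g \<in> Hom N 1" then show ?thesis by (intro exI[of _ 1]) simp
  next
    assume "g \<in> Hom N 2" then show ?thesis by (intro exI[of _ 2]) simp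
  qed
qed

theorem main_alg:
  fixes n :: nat and qs :: "'a::field mpoly list" and w z :: "'a mpoly"
  assumes CI: "CI_quadric_presentation (Suc n) qs"
    and w: "w \<in> Hom (Suc n) 1" "w \<notin> gen_ideal (Suc n) qs"
    and z: "z \<in> Hom (Suc n) 1" "z \<notin> gen_ideal (Suc n) qs"
    and zw: "z * w \<in> gen_ideal (Suc n) qs"
  shows "gen_ideal (Suc n) (qs @ [z]) = {f \<in> PR (Suc n). f * w \<in> gen_ideal (Suc n) qs}"
    and "\<exists>qs' \<sigma>. CI_quadric_presentation n qs' \<and> (\<forall>i<Suc n. \<sigma> i \<in> Hom n 1)
          \<and> subst \<sigma> ` PR (Suc n) = PR n
          \<and> {f \<in> PR (Suc n). subst \<sigma> f \<in> gen_ideal n qs'} = gen_ideal (Suc n) (qs @ [z])"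
proof -
  let ?N = "Suc n"
  define J where "J = gen_ideal ?N qs"
  have len: "length qs = Suc n" and qsH: "set qs \<subseteq> Hom ?N 2" and rs: "regular_seq ?N qs"
    using CI by (auto simp: CI_quadric_presentation_def)
  have qsP: "set qs \<subseteq> PR ?N" using qsH by (auto simp: Hom_iff)
  have regqs: "reg ?N qs" using rs by (simp add: regular_seq_iff)
  have zP: "z \<in> PR ?N" "homogeneous 1 z" and wP: "w \<in> PR ?N" "homogeneous 1 w"
    using z w by (auto simp: Hom_iff)
  have z0: "z \<noteq> 0" using z(2) gen_ideal_0 by metis
  have w0: "w \<noteq> 0" using w(2) gen_ideal_0 by metis
  have zwP: "z * w \<in> PR ?N" using PR_mult[OF zP(1) wP(1)] .
  have zwh: "homogeneous 2 (z * w)" using homogeneous_mult[OF zP(2) wP(2)] by (simp add: numeral_2_eq_2)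
  obtain b where b: "z * w = (\<Sum>i<length qs. const (b i) * qs ! i)"
    using gen_ideal_hom_scalars[OF zw zwh qsH] by blast
  define S where "S = {i. i < Suc n \<and> b i \<noteq> 0}"
  have finS: "finite S" unfolding S_def by simp
  have Sne: "S \<noteq> {}"
  proof
    assume "S = {}"
    then have "\<forall>i<length qs. b i = 0" using len by (auto simp: S_def)
    then have "z * w = 0" unfolding b by simp
    then show False using z0 w0 by simp
  qed
  define j where "j = Max S"
  have jS: "j \<in> S" unfolding j_def using finS Sne by (rule Max_in)
  then have j: "j < Suc n" "b j \<noteq> 0" by (auto simp: S_def)
  have jmax: "b i = 0" if "i < Suc n" "j < i" for i
  proof (rule ccontr)
    assume "b i \<noteq> 0"
    then have "i \<in> S" using that by (simp add: S_def)
    then have "i \<le> j" unfolding j_def using Max_ge[OF finS] by blast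
    then show False using that by simp
  qed
  define A where "A = take j qs"
  define q where "q = qs ! j"
  define B where "B = drop (Suc j) qs"
  have qsABC: "qs = A @ [q] @ B" unfolding A_def q_def B_def using id_take_nth_drop[of j qs] j len by simp
  have lenA: "length A = j" using j len by (simp add: A_def)
  have lenB: "length B = n - j" using j len by (simp add: B_def)
  define a0 where "a0 = (\<Sum>i<j. const (b i) * qs ! i)"
  have a0A: "a0 \<in> gen_ideal ?N A"
    unfolding gen_ideal_def a0_def lenA
    by (rule CollectI, rule exI[of _ "\<lambda>i. const (b i)"]) (simp add: A_def)
  have zw_dec: "z * w = a0 + const (b j) * q"
  proof -
    have "z * w = (\<Sum>i<Suc j. const (b i) * qs ! i)"
      unfolding b len
      by (rule sum.mono_neutral_right) (use j jmax in auto)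
    then show ?thesis by (simp add: a0_def q_def)
  qed
  have AP: "set A \<subseteq> PR ?N" "set B \<subseteq> PR ?N" "q \<in> PR ?N" using qsP qsABC by auto
  have AH: "set A \<subseteq> Hom ?N 2" "set B \<subseteq> Hom ?N 2" "q \<in> Hom ?N 2" using qsH qsABC by auto
  have zwH: "z * w \<in> Hom ?N 2" using zwP zwh by (simp add: Hom_iff)
  have reg1: "reg ?N (A @ [z * w] @ B)"
    by (rule reg_replace[OF _ _ zw_dec a0A j(2)]) (use regqs qsABC qsP in auto)
  define ps where "ps = A @ B"
  have psP: "set ps \<subseteq> PR ?N" and psH: "set ps \<subseteq> Hom ?N 2" using AP AH by (auto simp: ps_def)
  have lenps: "length ps = n" using lenA lenB j by (simp add: ps_def)
  have reg2: "reg ?N (ps @ [z * w])"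
  proof -
    have "poshoms (A @ [z * w] @ B)" by (rule poshoms12[where N = ?N]) (use AH zwH in auto)
    then show ?thesis unfolding ps_def using reg_move_end[OF reg1] AP zwP by auto
  qed
  have qform: "q = const (inverse (b j)) * (z * w - a0)"
    using j(2) by (simp add: zw_dec mult.assoc[symmetric] const_mult[symmetric])
  have J2: "gen_ideal ?N (ps @ [z * w]) = J"
  proof
    show "gen_ideal ?N (ps @ [z * w]) \<subseteq> J"
      unfolding J_def by (rule gen_ideal_subset) (use zw qsABC in \<open>auto simp: ps_def intro: gen_ideal_mem\<close>)
    show "J \<subseteq> gen_ideal ?N (ps @ [z * w])"
      unfolding J_def
    proof (rule gen_ideal_subset, rule subsetI)
      fix g assume "g \<in> set qs"
      then consider "g \<in> set ps" | "g = q" using qsABC by (auto simp: ps_def)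
      then show "g \<in> gen_ideal ?N (ps @ [z * w])"
      proof cases
        case 2
        have "a0 \<in> gen_ideal ?N (ps @ [z * w])"
          using gen_ideal_mono[of A "ps @ [z * w]" ?N] a0A by (auto simp: ps_def)
        moreover have "z * w \<in> gen_ideal ?N (ps @ [z * w])" by (rule gen_ideal_mem) simp
        ultimately show ?thesis unfolding 2 qform by (intro gen_ideal_mult[OF PR_const] gen_ideal_diff)
      qed (auto intro: gen_ideal_mem)
    qed
  qed
  have ps_reg: "reg ?N ps" and nzd_zw: "nzd ?N (gen_ideal ?N ps) (z * w)"
    using reg2 by (simp_all add: reg_snoc)
  have nzd_w: "nzd ?N (gen_ideal ?N ps) w" by (rule nzd_factor[OF nzd_zw zP(1)])
  have nzd_z: "nzd ?N (gen_ideal ?N ps) z" by (rule nzd_factor[OF _ wP(1)]) (subst mult.commute, rule nzd_zw)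
  have gz: "gen_ideal ?N (ps @ [z]) = gen_ideal ?N (qs @ [z])"
  proof
    show "gen_ideal ?N (ps @ [z]) \<subseteq> gen_ideal ?N (qs @ [z])"
      by (rule gen_ideal_mono) (use qsABC in \<open>auto simp: ps_def\<close>)
    show "gen_ideal ?N (qs @ [z]) \<subseteq> gen_ideal ?N (ps @ [z])"
    proof (rule gen_ideal_subset, rule subsetI)
      fix g assume "g \<in> set (qs @ [z])"
      then consider "g \<in> set (ps @ [z])" | "g = q" using qsABC by (auto simp: ps_def)
      then show "g \<in> gen_ideal ?N (ps @ [z])"
      proof cases
        case 2
        have "a0 \<in> gen_ideal ?N (ps @ [z])"
          using gen_ideal_mono[of A "ps @ [z]" ?N] a0A by (auto simp: ps_def)
        moreover have "w * z \<in> gen_ideal ?N (ps @ [z])" by (rule gen_ideal_mult[OF wP(1) gen_ideal_mem]) simp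
        ultimately show ?thesis unfolding 2 qform by (intro gen_ideal_mult[OF PR_const] gen_ideal_diff) (simp_all add: mult.commute)
      qed (auto intro: gen_ideal_mem)
    qed
  qed
  have genzP: "gen_ideal ?N (qs @ [z]) \<subseteq> PR ?N" by (rule gen_ideal_PR) (use qsP zP in auto)
  show part1: "gen_ideal ?N (qs @ [z]) = {f \<in> PR ?N. f * w \<in> gen_ideal ?N qs}"
  proof (intro equalityI subsetI)
    fix f assume f: "f \<in> gen_ideal ?N (qs @ [z])"
    then obtain a c where ac: "f = a + c * z" "a \<in> J" "c \<in> PR ?N" unfolding gen_ideal_snoc J_def by blast
    have "f * w = w * a + c * (z * w)" by (simp add: ac algebra_simps)
    also have "\<dots> \<in> J" unfolding J_def
      using gen_ideal_add[OF gen_ideal_mult[OF wP(1) ac(2)[unfolded J_def]] gen_ideal_mult[OF ac(3) zw]] .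
    finally show "f \<in> {f \<in> PR ?N. f * w \<in> gen_ideal ?N qs}" using f genzP by (auto simp: J_def)
  next
    fix f assume "f \<in> {f \<in> PR ?N. f * w \<in> gen_ideal ?N qs}"
    then have f: "f \<in> PR ?N" "f * w \<in> gen_ideal ?N (ps @ [z * w])" using J2 by (auto simp: J_def)
    then obtain a c where ac: "f * w = a + c * (z * w)" "a \<in> gen_ideal ?N ps" "c \<in> PR ?N"
      unfolding gen_ideal_snoc by blast
    have "(f - c * z) * w = a" using ac(1) by (simp add: algebra_simps)
    then have "f - c * z \<in> gen_ideal ?N ps"
      using nzd_w ac(2) f(1) ac(3) zP(1) unfolding nzd_def by (metis PR_diff PR_mult)
    then have "(f - c * z) + c * z \<in> gen_ideal ?N (ps @ [z])" using ac(3) by (rule gen_ideal_snoc_mem)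
    then show "f \<in> gen_ideal ?N (qs @ [z])" using gz by simp
  qed
  have reg3: "reg ?N (ps @ [z])" using ps_reg nzd_z by (simp add: reg_snoc)
  have reg4: "reg ?N (z # ps)"
  proof -
    have "poshoms (ps @ [z] @ [])" by (rule poshoms12[where N = ?N]) (use psH z in auto)
    then show ?thesis using reg_move_front[of ?N ps z "[]"] reg3 psP zP by auto
  qed
  obtain k where k: "k < Suc n" "coef z k \<noteq> 0"
  proof (rule ccontr)
    assume "\<not> thesis"
    then have "\<forall>k<Suc n. coef z k = 0" using that by blast
    then have "z = 0" using linear_form[OF z(1)] by simp
    then show False using z0 by simp
  qed
  interpret C: coord z n k by unfold_locales (use z k in auto)
  define qs' where "qs' = map (subst (sig z n k)) ps"
  have qs'H: "set qs' \<subseteq> Hom n 2" unfolding qs'_def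
    using psH by (auto intro!: homogeneous_subst C.sig_Hom)
  have reg': "reg n qs'"
    unfolding reg_def
  proof (intro allI impI)
    fix i assume i: "i < length qs'"
    then have ip: "i < length ps" by (simp add: qs'_def)
    let ?G = "take i ps"
    have GP: "set ?G \<subseteq> PR ?N" using psP by (meson in_set_takeD subset_code(1))
    have e1: "take i qs' = map (subst (sig z n k)) ?G" by (simp add: qs'_def take_map)
    have e2: "qs' ! i = subst (sig z n k) (ps ! i)" using ip by (simp add: qs'_def)
    show "nzd n (gen_ideal n (take i qs')) (qs' ! i)"
      unfolding nzd_def
    proof safe
      fix g assume g: "g \<in> PR n" "g * qs' ! i \<in> gen_ideal n (take i qs')"
      have tg: "subst (tau k) g \<in> PR ?N" using g(1) by (rule PR_subst) (rule C.tau_PR)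
      have piP: "ps ! i \<in> PR ?N" using psP ip by auto
      have "subst (sig z n k) (subst (tau k) g * ps ! i) = g * qs' ! i"
        by (simp add: subst_mult C.sig_tau_id[OF g(1)] e2)
      then have "subst (tau k) g * ps ! i \<in> gen_ideal ?N (z # ?G)"
        using C.transfer_ideal[OF GP PR_mult[OF tg piP]] g(2) e1 by simp
      then have "subst (tau k) g \<in> gen_ideal ?N (z # ?G)"
        using reg_Cons_Suc[OF reg4 ip] tg unfolding nzd_def by blast
      then have "subst (sig z n k) (subst (tau k) g) \<in> gen_ideal n (map (subst (sig z n k)) ?G)"
        using C.transfer_ideal[OF GP tg] by simp
      then show "g \<in> gen_ideal n (take i qs')" using C.sig_tau_id[OF g(1)] e1 by simp
    qed
  qed
  have CI': "CI_quadric_presentation n qs'"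
    unfolding CI_quadric_presentation_def regular_seq_iff
  proof (intro conjI)
    show "length qs' = n" by (simp add: qs'_def lenps)
    show "set qs' \<subseteq> Hom n 2" by (rule qs'H)
    show "set qs' \<subseteq> PR n" using qs'H by (auto simp: Hom_iff)
    show "gen_ideal n qs' \<noteq> PR n" by (rule gen_ideal_ne_PR, rule poshoms12[where N = n]) (use qs'H in auto)
    show "reg n qs'" by (rule reg')
  qed
  have last: "{f \<in> PR ?N. subst (sig z n k) f \<in> gen_ideal n qs'} = gen_ideal ?N (qs @ [z])"
  proof -
    have "{f \<in> PR ?N. subst (sig z n k) f \<in> gen_ideal n qs'} = {f \<in> PR ?N. f \<in> gen_ideal ?N (z # ps)}"
      unfolding qs'_def using C.transfer_ideal[OF psP] by blast
    also have "gen_ideal ?N (z # ps) = gen_ideal ?N (ps @ [z])" by (rule gen_ideal_set_eq) simp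
    finally show ?thesis using gz genzP by auto
  qed
  show "\<exists>qs' \<sigma>. CI_quadric_presentation n qs' \<and> (\<forall>i<Suc n. \<sigma> i \<in> Hom n 1)
          \<and> subst \<sigma> ` PR (Suc n) = PR n
          \<and> {f \<in> PR (Suc n). subst \<sigma> f \<in> gen_ideal n qs'} = gen_ideal (Suc n) (qs @ [z])"
    using CI' C.sig_Hom C.image_PR last by blast
qed

context vector_space
begin

lemma span_disjoint_zero:
  assumes D: "independent D" "finite D" and XY: "X \<subseteq> D" "Y \<subseteq> D" "X \<inter> Y = {}"
    and x: "x \<in> span X" "x \<in> span Y"
  shows "x = 0"
proof -
  have fX: "finite X" using finite_subset[OF XY(1) D(2)] .
  have fY: "finite Y" using finite_subset[OF XY(2) D(2)] .
  obtain a where a: "x = (\<Sum>v\<in>X. a v *s v)" using x(1) span_finite[OF fX] by auto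
  obtain b where b: "x = (\<Sum>v\<in>Y. b v *s v)" using x(2) span_finite[OF fY] by auto
  define c where "c v = (if v \<in> X then a v else - b v)" for v
  have "(\<Sum>v\<in>X \<union> Y. c v *s v) = (\<Sum>v\<in>X. c v *s v) + (\<Sum>v\<in>Y. c v *s v)"
    by (rule sum.union_disjoint) (use fX fY XY in auto)
  also have "(\<Sum>v\<in>X. c v *s v) = x" unfolding a by (rule sum.cong) (auto simp: c_def)
  also have "(\<Sum>v\<in>Y. c v *s v) = - x" unfolding b using XY(3)
    by (auto simp: c_def sum_negf[symmetric] intro!: sum.cong)
  finally have s0: "(\<Sum>v\<in>X \<union> Y. c v *s v) = 0" by simp
  have "\<forall>v\<in>X. a v = 0"
  proof
    fix v assume v: "v \<in> X"
    have "c v = 0" by (rule independentD[OF D(1) _ _ s0]) (use fX fY XY v in auto)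
    then show "a v = 0" using v by (simp add: c_def)
  qed
  then show ?thesis unfolding a by simp
qed

lemma independent_Un_span:
  assumes S: "independent S" "finite S" and T: "independent T" "finite T"
    and ST: "\<And>y. y \<in> span S \<Longrightarrow> y \<in> span T \<Longrightarrow> y = 0"
  shows "independent (S \<union> T)" "S \<inter> T = {}"
proof -
  show disj: "S \<inter> T = {}"
  proof (rule ccontr)
    assume "S \<inter> T \<noteq> {}"
    then obtain v where v: "v \<in> S" "v \<in> T" by blast
    then have "v = 0" using ST span_base by blast
    then show False using v S(1) dependent_zero by blast
  qed
  show "independent (S \<union> T)"
  proof (rule independent_if_scalars_zero)
    show "finite (S \<union> T)" using S T by simp
    fix f x assume s0: "(\<Sum>x\<in>S \<union> T. f x *s x) = 0" and x: "x \<in> S \<union> T"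
    have "(\<Sum>x\<in>S \<union> T. f x *s x) = (\<Sum>x\<in>S. f x *s x) + (\<Sum>x\<in>T. f x *s x)"
      by (rule sum.union_disjoint) (use S T disj in auto)
    then have e: "(\<Sum>x\<in>S. f x *s x) = - (\<Sum>x\<in>T. f x *s x)" using s0 by (simp add: eq_neg_iff_add_eq_0)
    have "(\<Sum>x\<in>S. f x *s x) \<in> span S" by (intro span_sum span_scale span_base)
    moreover have "(\<Sum>x\<in>S. f x *s x) \<in> span T" unfolding e by (intro span_neg span_sum span_scale span_base)
    ultimately have s1: "(\<Sum>x\<in>S. f x *s x) = 0" using ST by blast
    then have s2: "(\<Sum>x\<in>T. f x *s x) = 0" using e by simp
    show "f x = 0"
    proof (cases "x \<in> S")
      case True then show ?thesis using independentD[OF S(1) S(2) subset_refl s1] by simp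
    next
      case False then show ?thesis using x independentD[OF T(1) T(2) subset_refl s2] by simp
    qed
  qed
qed

lemma dim_formula:
  assumes sT: "subspace T" and sJ: "subspace Js" and sB: "subspace B" and BT: "B \<subseteq> T"
    and fT: "finite FT" "T \<subseteq> span FT" and fJ: "finite FJ" "Js \<subseteq> span FJ"
    and h: "module_hom scale scale h" "inj h"
    and hB: "\<And>g. g \<in> T \<Longrightarrow> h g \<in> Js \<longleftrightarrow> g \<in> B"
    and A: "A = {h g + j | g j. g \<in> T \<and> j \<in> Js}"
  shows "dim A + dim B = dim T + dim Js"
proof -
  obtain CB where CB: "CB \<subseteq> B" "independent CB" "B \<subseteq> span CB" "card CB = dim B"
    by (rule basis_exists)
  obtain DT where DT: "CB \<subseteq> DT" "DT \<subseteq> T" "independent DT" "T \<subseteq> span DT"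
    using maximal_independent_subset_extend[of CB T] CB BT by blast
  obtain E where E: "E \<subseteq> Js" "independent E" "Js \<subseteq> span E" "card E = dim Js"
    by (rule basis_exists)
  have finDT: "finite DT" using independent_span_bound[OF fT(1) DT(3)] DT(2) fT(2) by blast
  have finE: "finite E" using independent_span_bound[OF fJ(1) E(2)] E(1) fJ(2) by blast
  have finCB: "finite CB" using finDT DT(1) finite_subset by blast
  have cardDT: "card DT = dim T" by (rule basis_card_eq_dim[OF DT(2) DT(4) DT(3)])
  interpret H: module_hom scale scale h by (rule h(1))
  let ?H = "h ` (DT - CB)"
  have spanT: "span DT \<subseteq> T" using DT(2) sT by (simp add: span_minimal)
  have spanB: "span CB \<subseteq> B" using CB(1) sB by (simp add: span_minimal)
  have spanE: "span E \<subseteq> Js" using E(1) sJ by (simp add: span_minimal)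
  have indH: "independent ?H"
    by (rule H.independent_injective_image) (use DT(3) h(2) independent_mono in \<open>auto intro: inj_on_subset\<close>)
  have finH: "finite ?H" using finDT by simp
  have inter: "y = 0" if y: "y \<in> span E" "y \<in> span ?H" for y
  proof -
    have "y \<in> h ` span (DT - CB)" using y(2) H.span_image by simp
    then obtain g where g: "g \<in> span (DT - CB)" "y = h g" by blast
    have gT: "g \<in> T" using g(1) span_mono[of "DT - CB" DT] spanT by blast
    have "h g \<in> Js" using y(1) spanE g(2) by blast
    then have "g \<in> B" using hB gT by blast
    then have gC: "g \<in> span CB" using CB(3) by blast
    have "g = 0" using span_disjoint_zero[OF DT(3) finDT DT(1) _ _ gC g(1)] by auto
    then show "y = 0" using g(2) by simp
  qed
  have indF: "independent (E \<union> ?H)" and disjF: "E \<inter> ?H = {}"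
    using independent_Un_span[OF E(2) finE indH finH inter] by auto
  have FA: "E \<union> ?H \<subseteq> A"
  proof
    fix x assume "x \<in> E \<union> ?H"
    then show "x \<in> A"
    proof
      assume "x \<in> E"
      then have "x = h 0 + x" "0 \<in> T" "x \<in> Js" using E(1) sT subspace_0 by auto
      then show ?thesis unfolding A by blast
    next
      assume "x \<in> ?H"
      then obtain g where "g \<in> T" "x = h g + 0" using DT(2) by auto
      moreover have "0 \<in> Js" using sJ subspace_0 by blast
      ultimately show ?thesis unfolding A by blast
    qed
  qed
  have AF: "A \<subseteq> span (E \<union> ?H)"
  proof
    fix x assume "x \<in> A"
    then obtain g j where gj: "x = h g + j" "g \<in> T" "j \<in> Js" unfolding A by blast
    have eqD: "CB \<union> (DT - CB) = DT" using DT(1) by blast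
    have "g \<in> span (CB \<union> (DT - CB))" unfolding eqD using gj(2) DT(4) by blast
    then obtain g1 g2 where g12: "g = g1 + g2" "g1 \<in> span CB" "g2 \<in> span (DT - CB)"
      unfolding span_Un by blast
    have "g1 \<in> B" using g12(2) spanB by blast
    then have "h g1 \<in> Js" using hB BT by blast
    then have "h g1 + j \<in> span E" using gj(3) E(3) span_add by blast
    moreover have "h g2 \<in> span ?H" using g12(3) H.span_image by simp
    ultimately have "(h g1 + j) + h g2 \<in> span (E \<union> ?H)"
      using span_mono[of E "E \<union> ?H"] span_mono[of ?H "E \<union> ?H"] by (blast intro: span_add)
    then show "x \<in> span (E \<union> ?H)" using gj(1) g12(1) by (simp add: H.add ac_simps)
  qed
  have "dim A = card (E \<union> ?H)" using basis_card_eq_dim[OF FA AF indF] by simp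
  also have "\<dots> = card E + card ?H" using finE finH disjF by (simp add: card_Un_disjoint)
  also have "card ?H = card (DT - CB)" using h(2) by (simp add: card_image inj_on_subset)
  also have "\<dots> = card DT - card CB" using finCB DT(1) by (simp add: card_Diff_subset)
  finally have "dim A = dim Js + (dim T - dim B)" using E(4) cardDT CB(4) by simp
  moreover have "dim B \<le> dim T" using CB(4) cardDT card_mono[OF finDT DT(1)] by simp
  ultimately show ?thesis by simp
qed

end

lemma smul_vs: "vector_space (smul :: 'a::field \<Rightarrow> 'a mpoly \<Rightarrow> 'a mpoly)"
  by unfold_locales (simp_all add: smul_def const_add const_mult distrib_left distrib_right mult.assoc)

interpretation mpv: vector_space "smul :: 'a::field \<Rightarrow> 'a mpoly \<Rightarrow> 'a mpoly"
  by (rule smul_vs)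

lemma kdim_eq: "kdim U = mpv.dim U"
  by (simp add: kdim_def)

lemma subspace_Hom: "mpv.subspace (Hom N d :: 'a::field mpoly set)"
  by (rule mpv.subspaceI) (auto simp: Hom_iff smul_def PR_add PR_mult homogeneous_add homogeneous_const_mult)

lemma subspace_gen_ideal: "mpv.subspace (gen_ideal N gs :: 'a::field mpoly set)"
  by (rule mpv.subspaceI) (auto simp: smul_def gen_ideal_add gen_ideal_mult)

lemma subspace_colon:
  assumes "mpv.subspace (U :: 'a::field mpoly set)"
  shows "mpv.subspace {g \<in> U. z * g \<in> gen_ideal N gs}"
proof (rule mpv.subspaceI)
  show "0 \<in> {g \<in> U. z * g \<in> gen_ideal N gs}" using mpv.subspace_0[OF assms] by simp
  fix x y assume "x \<in> {g \<in> U. z * g \<in> gen_ideal N gs}" "y \<in> {g \<in> U. z * g \<in> gen_ideal N gs}"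
  then show "x + y \<in> {g \<in> U. z * g \<in> gen_ideal N gs}"
    using mpv.subspace_add[OF assms] by (auto simp: distrib_left gen_ideal_add)
next
  fix c x assume x: "x \<in> {g \<in> U. z * g \<in> gen_ideal N gs}"
  have e: "z * smul c x = const c * (z * x)" by (simp add: smul_def mult.left_commute)
  have a: "smul c x \<in> U" using x mpv.subspace_scale[OF assms] by blast
  have b: "z * smul c x \<in> gen_ideal N gs" unfolding e using x gen_ideal_mult[OF PR_const] by blast
  show "smul c x \<in> {g \<in> U. z * g \<in> gen_ideal N gs}" using a b by blast
qed

definition Mon :: "nat \<Rightarrow> nat \<Rightarrow> (nat \<Rightarrow>\<^sub>0 nat) set" where
  "Mon N d = {m. Poly_Mapping.keys m \<subseteq> {..<N} \<and> tdeg m = d}"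

lemma lookup_le_tdeg: "Poly_Mapping.lookup m i \<le> tdeg m"
proof (cases "i \<in> Poly_Mapping.keys m")
  case True then show ?thesis unfolding tdeg_def by (rule member_le_sum) auto
next
  case False then show ?thesis by (simp add: in_keys_iff)
qed

lemma finite_Mon: "finite (Mon N d)"
proof -
  let ?f = "\<lambda>m::nat \<Rightarrow>\<^sub>0 nat. restrict (Poly_Mapping.lookup m) {..<N}"
  have "?f ` Mon N d \<subseteq> PiE {..<N} (\<lambda>_. {..d})"
    by (auto simp: Mon_def PiE_iff lookup_le_tdeg split: if_splits)
  then have "finite (?f ` Mon N d)" by (rule finite_subset) (simp add: finite_PiE)
  moreover have "inj_on ?f (Mon N d)"
  proof (rule inj_onI)
    fix m m' assume m: "m \<in> Mon N d" "m' \<in> Mon N d" and e: "?f m = ?f m'"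
    show "m = m'"
    proof (rule poly_mapping_eqI)
      fix i show "Poly_Mapping.lookup m i = Poly_Mapping.lookup m' i"
      proof (cases "i < N")
        case True then show ?thesis using fun_cong[OF e, of i] by simp
      next
        case False
        then have "i \<notin> Poly_Mapping.keys m" "i \<notin> Poly_Mapping.keys m'" using m by (auto simp: Mon_def)
        then show ?thesis by (simp add: in_keys_iff)
      qed
    qed
  qed
  ultimately show ?thesis by (rule finite_imageD)
qed

lemma Hom_span: "Hom N d \<subseteq> mpv.span ((\<lambda>m. Poly_Mapping.single m (1::'a::field)) ` Mon N d)"
proof
  fix p :: "'a mpoly" assume p: "p \<in> Hom N d"
  have "p = (\<Sum>m\<in>Poly_Mapping.keys p. Poly_Mapping.single m (Poly_Mapping.lookup p m))" by (rule pm_expansion)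
  also have "\<dots> = (\<Sum>m\<in>Poly_Mapping.keys p. smul (Poly_Mapping.lookup p m) (Poly_Mapping.single m 1))"
    by (simp only: smul_def single_const[symmetric])
  also have "\<dots> \<in> mpv.span ((\<lambda>m. Poly_Mapping.single m (1::'a)) ` Mon N d)"
  proof (intro mpv.span_sum mpv.span_scale mpv.span_base)
    fix m assume "m \<in> Poly_Mapping.keys p"
    then have "m \<in> Mon N d" using p by (auto simp: Mon_def Hom_iff PR_def homogeneous_def)
    then show "Poly_Mapping.single m 1 \<in> (\<lambda>m. Poly_Mapping.single m (1::'a)) ` Mon N d" by blast
  qed
  finally show "p \<in> mpv.span ((\<lambda>m. Poly_Mapping.single m (1::'a)) ` Mon N d)" .
qed

lemma mult_hom: "module_hom smul smul (\<lambda>x. z * (x :: 'a::field mpoly))"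
  unfolding module_hom_iff
  using smul_vs by (simp add: module_iff_vector_space smul_def distrib_left mult.left_commute)

lemma mult_inj: "(z :: 'a::field mpoly) \<noteq> 0 \<Longrightarrow> inj (\<lambda>x. z * x)"
  by (auto simp: inj_def)

theorem dim_part:
  fixes n :: nat and qs :: "'a::field mpoly list" and w z :: "'a mpoly"
  assumes CI: "CI_quadric_presentation (Suc n) qs"
    and w: "w \<in> Hom (Suc n) 1" "w \<notin> gen_ideal (Suc n) qs"
    and z: "z \<in> Hom (Suc n) 1" "z \<notin> gen_ideal (Suc n) qs"
    and zw: "z * w \<in> gen_ideal (Suc n) qs"
  shows "Kdim (Suc n) (gen_ideal (Suc n) qs) w (Suc t)
          = Rdim (Suc n) (gen_ideal (Suc n) qs) t - Kdim (Suc n) (gen_ideal (Suc n) qs) z t"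
proof -
  let ?N = "Suc n"
  define J where "J = gen_ideal ?N qs"
  have qsH: "set qs \<subseteq> Hom ?N 2" using CI by (auto simp: CI_quadric_presentation_def)
  have qsP: "set qs \<subseteq> PR ?N" using qsH by (auto simp: Hom_iff)
  have homs: "homs qs" unfolding homs_def
  proof
    fix g assume "g \<in> set qs"
    then have "homogeneous 2 g" using qsH by (auto simp: Hom_iff)
    then show "\<exists>e. homogeneous e g" by blast
  qed
  have zP: "z \<in> PR ?N" "homogeneous 1 z" using z by (auto simp: Hom_iff)
  have z0: "z \<noteq> 0" using z(2) gen_ideal_0 by metis
  have part1: "gen_ideal ?N (qs @ [z]) = {f \<in> PR ?N. f * w \<in> J}"
    unfolding J_def by (rule main_alg(1)[OF CI w z zw])
  define T where "T = (Hom ?N t :: 'a mpoly set)"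
  define Js where "Js = J \<inter> Hom ?N (Suc t)"
  define B where "B = {g \<in> T. z * g \<in> J}"
  define A where "A = {f \<in> Hom ?N (Suc t). f * w \<in> J}"
  have sT: "mpv.subspace T" unfolding T_def by (rule subspace_Hom)
  have sJ: "mpv.subspace Js" unfolding Js_def J_def
    by (rule mpv.subspace_inter[OF subspace_gen_ideal subspace_Hom])
  have sB: "mpv.subspace B" unfolding B_def J_def by (rule subspace_colon[OF sT])
  have hB: "z * g \<in> Js \<longleftrightarrow> g \<in> B" if g: "g \<in> T" for g
  proof -
    have "z * g \<in> Hom ?N (Suc t)"
      using g zP homogeneous_mult[OF zP(2), of t g] by (auto simp: T_def Hom_iff PR_mult)
    then show ?thesis using g by (auto simp: Js_def B_def)
  qed
  have Aeq: "A = {z * g + j | g j. g \<in> T \<and> j \<in> Js}"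
  proof (intro equalityI subsetI)
    fix f assume "f \<in> A"
    then have f: "f \<in> Hom ?N (Suc t)" "f * w \<in> J" by (auto simp: A_def)
    then have "f \<in> gen_ideal ?N (qs @ [z])" using part1 by (auto simp: Hom_iff)
    then obtain a c where ac: "f = a + c * z" "a \<in> J" "c \<in> PR ?N"
      unfolding gen_ideal_snoc J_def by blast
    have aP: "a \<in> PR ?N" using ac(2) gen_ideal_PR[OF qsP] by (auto simp: J_def)
    have "f = hc (Suc t) f" using f(1) by (simp add: Hom_iff hc_homogeneous_same)
    also have "\<dots> = hc (Suc t) a + hc t c * z" using hc_mult_hom[OF zP(2), of "Suc t" c]
      by (simp add: ac(1) hc_add)
    finally have "f = z * hc t c + hc (Suc t) a" by (simp add: mult.commute add.commute)
    moreover have "hc t c \<in> T" using ac(3) by (simp add: T_def Hom_hc)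
    moreover have "hc (Suc t) a \<in> Js"
      using gen_ideal_hc[OF homs ac(2)[unfolded J_def]] Hom_hc[OF aP] by (simp add: Js_def J_def)
    ultimately show "f \<in> {z * g + j | g j. g \<in> T \<and> j \<in> Js}" by blast
  next
    fix f assume "f \<in> {z * g + j | g j. g \<in> T \<and> j \<in> Js}"
    then obtain g j where gj: "f = z * g + j" "g \<in> T" "j \<in> Js" by blast
    have zg: "z * g \<in> Hom ?N (Suc t)"
      using gj(2) zP homogeneous_mult[OF zP(2), of t g] by (auto simp: T_def Hom_iff PR_mult)
    have fH: "f \<in> Hom ?N (Suc t)" using zg gj(3)
      by (auto simp: gj(1) Js_def Hom_iff PR_add homogeneous_add)
    have "j + g * z \<in> gen_ideal ?N (qs @ [z])"
      by (rule gen_ideal_snoc_mem) (use gj(2,3) in \<open>auto simp: Js_def J_def T_def Hom_iff\<close>)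
    then have "f \<in> gen_ideal ?N (qs @ [z])" by (simp add: gj(1) mult.commute add.commute)
    then show "f \<in> A" using part1 fH by (auto simp: A_def)
  qed
  have df: "mpv.dim A + mpv.dim B = mpv.dim T + mpv.dim Js"
    by (rule mpv.dim_formula[OF sT sJ sB _ finite_imageI[OF finite_Mon] _ finite_imageI[OF finite_Mon] _
          mult_hom mult_inj[OF z0] hB Aeq])
      (auto simp: B_def T_def Js_def intro: subsetD[OF Hom_span])
  have K1: "Kdim ?N J w (Suc t) = int (mpv.dim A) - int (mpv.dim Js)"
    by (simp add: Kdim_def qdim_def kdim_eq A_def Js_def)
  have R: "Rdim ?N J t = int (mpv.dim T) - int (mpv.dim (J \<inter> Hom ?N t))"
    by (simp add: Rdim_def qdim_def kdim_eq T_def)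
  have K2: "Kdim ?N J z t = int (mpv.dim B) - int (mpv.dim (J \<inter> Hom ?N t))"
  proof -
    have "{f \<in> Hom ?N t. f * z \<in> J} = B" by (auto simp: B_def T_def mult.commute)
    then show ?thesis by (simp add: Kdim_def qdim_def kdim_eq)
  qed
  show ?thesis using df K1 R K2 unfolding J_def[symmetric] by linarith
qed

theorem mainTheorem13:
  fixes n :: nat and qs :: "'a::field_char_0 mpoly list" and w z :: "'a mpoly"
  assumes "alg_closed_field TYPE('a)"
    and "CI_quadric_presentation (n + 1) qs"
    and "w \<in> Hom (n + 1) 1" and "w \<notin> gen_ideal (n + 1) qs"
    and "z \<in> Hom (n + 1) 1" and "z \<notin> gen_ideal (n + 1) qs"
    and "z * w \<in> gen_ideal (n + 1) qs"
  shows "gen_ideal (n + 1) (qs @ [z]) = {f \<in> PR (n + 1). f * w \<in> gen_ideal (n + 1) qs}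
    \<and> (\<exists>qs' \<sigma>. CI_quadric_presentation n qs'
          \<and> (\<forall>i<n + 1. \<sigma> i \<in> Hom n 1)
          \<and> subst \<sigma> ` PR (n + 1) = PR n
          \<and> {f \<in> PR (n + 1). subst \<sigma> f \<in> gen_ideal n qs'} = gen_ideal (n + 1) (qs @ [z]))
    \<and> (\<forall>s\<ge>1. Kdim (n + 1) (gen_ideal (n + 1) qs) w s
          = Rdim (n + 1) (gen_ideal (n + 1) qs) (s - 1) - Kdim (n + 1) (gen_ideal (n + 1) qs) z (s - 1))"
proof -
  have h1: "CI_quadric_presentation (Suc n) qs" using assms(2) by simp
  have h2: "w \<in> Hom (Suc n) 1" "w \<notin> gen_ideal (Suc n) qs" using assms(3,4) by simp_all
  have h3: "z \<in> Hom (Suc n) 1" "z \<notin> gen_ideal (Suc n) qs" using assms(5,6) by simp_all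
  have h4: "z * w \<in> gen_ideal (Suc n) qs" using assms(7) by simp
  have p1: "gen_ideal (Suc n) (qs @ [z]) = {f \<in> PR (Suc n). f * w \<in> gen_ideal (Suc n) qs}"
    by (rule main_alg(1)[OF h1 h2 h3 h4])
  have p2: "\<exists>qs' \<sigma>. CI_quadric_presentation n qs' \<and> (\<forall>i<Suc n. \<sigma> i \<in> Hom n 1)
          \<and> subst \<sigma> ` PR (Suc n) = PR n
          \<and> {f \<in> PR (Suc n). subst \<sigma> f \<in> gen_ideal n qs'} = gen_ideal (Suc n) (qs @ [z])"
    by (rule main_alg(2)[OF h1 h2 h3 h4])
  have p3: "\<forall>s\<ge>1. Kdim (Suc n) (gen_ideal (Suc n) qs) w s
          = Rdim (Suc n) (gen_ideal (Suc n) qs) (s - 1) - Kdim (Suc n) (gen_ideal (Suc n) qs) z (s - 1)"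
  proof (intro allI impI)
    fix s :: nat assume "1 \<le> s"
    then obtain t where t: "s = Suc t" by (cases s) auto
    show "Kdim (Suc n) (gen_ideal (Suc n) qs) w s
          = Rdim (Suc n) (gen_ideal (Suc n) qs) (s - 1) - Kdim (Suc n) (gen_ideal (Suc n) qs) z (s - 1)"
      using dim_part[OF h1 h2 h3 h4, of t] t by simp
  qed
  show ?thesis using p1 p2 p3 by simp
qed

end
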